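(* Let $f\in\mathcal{K}$ have radius of convergence $R>0$ and fulcrum $F$. Assume that $$\limsup_{s\uparrow\ln R}\frac{|F^{(k)}(s)|}{F''(s)^{k/2}}<+\infty\quad\text{for every integer }k\ge3.$$ Then $f$ is Gaussian if and only if $$\lim_{s\uparrow\ln R}\frac{F^{(k)}(s)}{F''(s)^{k/2}}=0\quad\text{for every integer }k\ge3.$$
   Context: The class $\mathcal{K}$ consists of non-constant power series $f(z)=\sum_{n\ge0}a_nz^n$ with radius of convergence $R\in(0,+\infty]$, with $a_n\ge 0$ for all $n$ and $a_0>0$. For $t\in(0,R)$, $X_t$ is the random variable with $\mathbf{P}(X_t=n)=a_nt^n/f(t)$, $n\ge0$. Write $m_f(t)=\mathbf{E}(X_t)$, $\sigma_f^2(t)=\mathbf{V}(X_t)>0$ and $\breve{X}_t=(X_t-m_f(t))/\sigma_f(t)$. $f$ is called Gaussian if $\breve{X}_t$ converges in distribution to a standard normal random variable as $t\uparrow R$. The fulcrum of $f$ is $F(s)=\ln f(e^s)$ for real $s<\ln R$ (with $\ln R=+\infty$ if $R=+\infty$); $F''(s)=\sigma_f^2(e^s)$. *)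

theory Defs
  imports "HOL-Probability.Probability"
begin

text \<open>A power series f(z) = sum a_n z^n is represented by its coefficient sequence a.\<close>

definition classK :: "(nat \<Rightarrow> real) \<Rightarrow> bool" where
  "classK a \<longleftrightarrow> (\<forall>n. a n \<ge> 0) \<and> a 0 > 0 \<and> (\<exists>n\<ge>1. a n \<noteq> 0)
                 \<and> conv_radius a > 0"

definition psum :: "(nat \<Rightarrow> real) \<Rightarrow> real \<Rightarrow> real" where
  "psum a t = (\<Sum>n. a n * t ^ n)"

definition prob_X :: "(nat \<Rightarrow> real) \<Rightarrow> real \<Rightarrow> nat set \<Rightarrow> real" where
  "prob_X a t A = (\<Sum>n. (if n \<in> A then a n * t ^ n else 0)) / psum a t"

definition mean_f :: "(nat \<Rightarrow> real) \<Rightarrow> real \<Rightarrow> real" where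
  "mean_f a t = (\<Sum>n. real n * (a n * t ^ n / psum a t))"

definition var_f :: "(nat \<Rightarrow> real) \<Rightarrow> real \<Rightarrow> real" where
  "var_f a t = (\<Sum>n. (real n - mean_f a t)\<^sup>2 * (a n * t ^ n / psum a t))"

definition sigma_f :: "(nat \<Rightarrow> real) \<Rightarrow> real \<Rightarrow> real" where
  "sigma_f a t = sqrt (var_f a t)"

definition left_filter :: "ereal \<Rightarrow> real filter" where
  "left_filter L = (if L = \<infinity> then at_top else at_left (real_of_ereal L))"

definition ln_ereal :: "ereal \<Rightarrow> ereal" where
  "ln_ereal R = (if R = \<infinity> then \<infinity> else ereal (ln (real_of_ereal R)))"

definition Phi :: "real \<Rightarrow> real" where
  "Phi x = measure (density lborel std_normal_density) {..x}"

text \<open>f is Gaussian: the normalized variable (X_t - m_f(t))/sigma_f(t) converges in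
  distribution to a standard normal variable as t tends to R from the left, i.e. its
  distribution functions converge pointwise to Phi (continuous everywhere).\<close>
definition gaussian :: "(nat \<Rightarrow> real) \<Rightarrow> bool" where
  "gaussian a \<longleftrightarrow> (\<forall>x::real.
     ((\<lambda>t. prob_X a t {n. (real n - mean_f a t) / sigma_f a t \<le> x}) \<longlongrightarrow> Phi x)
       (left_filter (conv_radius a)))"

definition fulcrum :: "(nat \<Rightarrow> real) \<Rightarrow> real \<Rightarrow> real" where
  "fulcrum a s = ln (psum a (exp s))"

end

theory Submission
  imports Defs
begin

fun Ck :: "nat \<Rightarrow> real set \<Rightarrow> (real \<Rightarrow> real) \<Rightarrow> bool" where
  "Ck 0 S f = True"
| "Ck (Suc k) S f = ((\<forall>x\<in>S. (f has_real_derivative deriv f x) (at x)) \<and> Ck k S (deriv f))"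

lemma Ck_Suc_D: "Ck (Suc k) S f \<Longrightarrow> Ck k S f"
  by (induction k arbitrary: f) auto

lemma Ck_le: "k \<le> n \<Longrightarrow> Ck n S f \<Longrightarrow> Ck k S f"
  by (induction n rule: dec_induct) (metis Ck_Suc_D)+

lemma deriv_eq_on:
  assumes "open S" "\<And>x. x \<in> S \<Longrightarrow> f x = g x" "x \<in> S"
  shows "(deriv ^^ n) f x = (deriv ^^ n) g x"
proof -
  have "eventually (\<lambda>y. y \<in> S) (nhds x)" using assms by (intro eventually_nhds_in_open) auto
  then have "eventually (\<lambda>y. f y = g y) (nhds x)" by eventually_elim (use assms in auto)
  then show ?thesis by (rule higher_deriv_cong_ev) simp
qed

lemma Ck_cong:
  assumes "open S" "\<And>x. x \<in> S \<Longrightarrow> f x = g x" "Ck k S f"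
  shows "Ck k S g"
  using assms(2,3)
proof (induction k arbitrary: f g)
  case 0 then show ?case by simp
next
  case (Suc k)
  have d: "deriv f x = deriv g x" if "x \<in> S" for x
    using deriv_eq_on[OF assms(1) Suc.prems(1) that, where n=1] by simp
  have "\<forall>x\<in>S. (g has_real_derivative deriv g x) (at x)"
  proof
    fix x assume x: "x \<in> S"
    have "(f has_real_derivative deriv f x) (at x)" using Suc.prems x by auto
    then have "(g has_real_derivative deriv f x) (at x)"
      by (rule has_field_derivative_transform_within_open[OF _ assms(1) x]) (use Suc.prems in auto)
    then show "(g has_real_derivative deriv g x) (at x)" using d[OF x] by simp
  qed
  moreover have "Ck k S (deriv g)" using Suc.IH[of "deriv f" "deriv g"] Suc.prems d by auto
  ultimately show ?case by simp
qed

lemma Ck_from_deriv: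
  assumes "open S" "\<And>x. x \<in> S \<Longrightarrow> (f has_real_derivative f' x) (at x)" "Ck k S f'"
  shows "Ck (Suc k) S f"
proof -
  have d: "deriv f x = f' x" if "x \<in> S" for x using assms(2)[OF that] by (rule DERIV_imp_deriv)
  have "Ck k S (deriv f)" by (rule Ck_cong[OF assms(1) _ assms(3)]) (simp add: d)
  then show ?thesis using assms(2) d by simp
qed

lemma Ck_const: "Ck k S (\<lambda>x. c)"
proof (induction k arbitrary: c)
  case 0 then show ?case by simp
next
  case (Suc k)
  have "deriv (\<lambda>x. c) = (\<lambda>x. 0)" by (rule ext) (simp add: DERIV_imp_deriv)
  then show ?case using Suc[of 0] by simp
qed

lemma Ck_add:
  assumes "open S" "Ck k S f" "Ck k S g"
  shows "Ck k S (\<lambda>x. f x + g x)"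
  using assms(2,3)
proof (induction k arbitrary: f g)
  case 0 then show ?case by simp
next
  case (Suc k)
  show ?case
  proof (rule Ck_from_deriv[OF assms(1), of _ "\<lambda>x. deriv f x + deriv g x"])
    show "((\<lambda>x. f x + g x) has_real_derivative deriv f x + deriv g x) (at x)" if "x \<in> S" for x
      using Suc.prems that by (auto intro!: derivative_intros)
    show "Ck k S (\<lambda>x. deriv f x + deriv g x)" using Suc by simp
  qed
qed

lemma Ck_mult:
  assumes "open S" "Ck k S f" "Ck k S g"
  shows "Ck k S (\<lambda>x. f x * g x)"
  using assms(2,3)
proof (induction k arbitrary: f g)
  case 0 then show ?case by simp
next
  case (Suc k)
  show ?case
  proof (rule Ck_from_deriv[OF assms(1), of _ "\<lambda>x. deriv f x * g x + f x * deriv g x"])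
    show "((\<lambda>x. f x * g x) has_real_derivative deriv f x * g x + f x * deriv g x) (at x)" if "x \<in> S" for x
      using Suc.prems that by (auto intro!: derivative_eq_intros)
    have "Ck k S (\<lambda>x. deriv f x * g x)" using Suc.IH[of "deriv f" g] Suc.prems Ck_Suc_D by auto
    moreover have "Ck k S (\<lambda>x. f x * deriv g x)" using Suc.IH[of f "deriv g"] Suc.prems Ck_Suc_D by auto
    ultimately show "Ck k S (\<lambda>x. deriv f x * g x + f x * deriv g x)" by (rule Ck_add[OF assms(1)])
  qed
qed

lemma Ck_cmult: "open S \<Longrightarrow> Ck k S f \<Longrightarrow> Ck k S (\<lambda>x. c * f x)"
  using Ck_mult[of S k "\<lambda>x. c" f] Ck_const by auto

lemma Ck_inverse:
  assumes "open S" "Ck k S f" "\<And>x. x \<in> S \<Longrightarrow> f x \<noteq> 0"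
  shows "Ck k S (\<lambda>x. inverse (f x))"
  using assms(2)
proof (induction k)
  case 0 then show ?case by simp
next
  case (Suc k)
  show ?case
  proof (rule Ck_from_deriv[OF assms(1), of _ "\<lambda>x. (-1) * (deriv f x * (inverse (f x) * inverse (f x)))"])
    show "((\<lambda>x. inverse (f x)) has_real_derivative (-1) * (deriv f x * (inverse (f x) * inverse (f x)))) (at x)" if "x \<in> S" for x
      using Suc.prems that assms(3)[OF that]
      by (auto intro!: derivative_eq_intros simp: field_simps power2_eq_square)
    have i: "Ck k S (\<lambda>x. inverse (f x))" using Suc Ck_Suc_D by blast
    have "Ck k S (deriv f)" using Suc.prems by simp
    then show "Ck k S (\<lambda>x. (-1) * (deriv f x * (inverse (f x) * inverse (f x))))"
      by (intro Ck_cmult Ck_mult i assms(1))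
  qed
qed

lemma Ck_iff: "Ck n S f \<longleftrightarrow> (\<forall>i<n. \<forall>x\<in>S. ((deriv ^^ i) f has_real_derivative (deriv ^^ Suc i) f x) (at x))"
proof (induction n arbitrary: f)
  case 0 then show ?case by simp
next
  case (Suc n)
  have e: "(deriv ^^ Suc i) f = (deriv ^^ i) (deriv f)" for i
    by (simp add: funpow_Suc_right del: funpow.simps)
  show ?case
    unfolding Ck.simps Suc.IH
    apply (simp only: e[symmetric])
    apply (auto simp: less_Suc_eq_0_disj)
    done
qed

lemma higher_deriv_add:
  assumes "open S" "Ck n S f" "Ck n S g" "x \<in> S"
  shows "(deriv ^^ n) (\<lambda>x. f x + g x) x = (deriv ^^ n) f x + (deriv ^^ n) g x"
  using assms(2,3,4)
proof (induction n arbitrary: f g x)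
  case 0 then show ?case by simp
next
  case (Suc n)
  have e: "(deriv ^^ Suc n) h = (deriv ^^ n) (deriv h)" for h
    by (simp add: funpow_Suc_right del: funpow.simps)
  have "(deriv ^^ n) (deriv (\<lambda>x. f x + g x)) x = (deriv ^^ n) (\<lambda>x. deriv f x + deriv g x) x"
    apply (rule deriv_eq_on[OF assms(1) _ Suc.prems(3)])
    using Suc.prems by (auto intro!: DERIV_imp_deriv derivative_eq_intros)
  also have "\<dots> = (deriv ^^ n) (deriv f) x + (deriv ^^ n) (deriv g) x"
    using Suc by simp
  finally show ?case by (simp only: e)
qed

lemma higher_deriv_cmult:
  assumes "open S" "Ck n S f" "x \<in> S"
  shows "(deriv ^^ n) (\<lambda>x. c * f x) x = c * (deriv ^^ n) f x"
  using assms(2,3)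
proof (induction n arbitrary: f x)
  case 0 then show ?case by simp
next
  case (Suc n)
  have e: "(deriv ^^ Suc n) h = (deriv ^^ n) (deriv h)" for h
    by (simp add: funpow_Suc_right del: funpow.simps)
  have "(deriv ^^ n) (deriv (\<lambda>x. c * f x)) x = (deriv ^^ n) (\<lambda>x. c * deriv f x) x"
    apply (rule deriv_eq_on[OF assms(1) _ Suc.prems(2)])
    using Suc.prems by (auto intro!: DERIV_imp_deriv derivative_eq_intros)
  also have "\<dots> = c * (deriv ^^ n) (deriv f) x"
    using Suc by simp
  finally show ?case by (simp only: e)
qed

lemma Suc_choose: "Suc n choose k = (n choose k) + (if k = 0 then 0 else (n choose (k-1)))"
  by (cases k) auto

lemma higher_deriv_mult_real:
  assumes "open S" "Ck n S f" "Ck n S g" "z \<in> S"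
  shows "(deriv ^^ n) (\<lambda>w. f w * g w) z =
           (\<Sum>i = 0..n. of_nat (n choose i) * (deriv ^^ i) f z * (deriv ^^ (n-i)) g z)"
  using assms(2,3,4)
proof (induction n arbitrary: z)
  case 0 then show ?case by simp
next
  case (Suc n z)
  have fS: "Ck n S f" "Ck n S g" using Suc.prems Ck_Suc_D by blast+
  have *: "\<And>i. i \<le> n \<Longrightarrow> ((deriv ^^ i) f has_field_derivative deriv ((deriv ^^ i) f) z) (at z)"
          "\<And>i. i \<le> n \<Longrightarrow> ((deriv ^^ i) g has_field_derivative deriv ((deriv ^^ i) g) z) (at z)"
    using Suc.prems unfolding Ck_iff by auto
  have sumeq: "(\<Sum>i = 0..n.
               of_nat (n choose i) * (deriv ((deriv ^^ i) f) z * (deriv ^^ (n-i)) g z + deriv ((deriv ^^ (n-i)) g) z * (deriv ^^ i) f z)) =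
            g z * deriv ((deriv ^^ n) f) z + (\<Sum>i = 0..n. (deriv ^^ i) f z * (of_nat (Suc n choose i) * (deriv ^^ (Suc n - i)) g z))"
    apply (simp add: Suc_choose algebra_simps sum.distrib)
    apply (subst (4) sum_Suc_reindex)
    apply (auto simp: algebra_simps Suc_diff_le intro: sum.cong)
    done
  have d: "((\<lambda>w. (\<Sum>i = 0..n. of_nat (n choose i) * (deriv ^^ i) f w * (deriv ^^ (n-i)) g w)) has_field_derivative
         (\<Sum>i = 0..n. of_nat (n choose i) * (deriv ((deriv ^^ i) f) z * (deriv ^^ (n-i)) g z + deriv ((deriv ^^ (n-i)) g) z * (deriv ^^ i) f z))) (at z)" (is ?thesis0)
  proof (rule DERIV_sum)
    fix i assume i: "i \<in> {0..n}"
    have a: "((deriv ^^ i) f has_field_derivative deriv ((deriv ^^ i) f) z) (at z)"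
      using *(1)[of i] i by simp
    have b: "((deriv ^^ (n-i)) g has_field_derivative deriv ((deriv ^^ (n-i)) g) z) (at z)"
      using *(2)[of "n-i"] by simp
    show "((\<lambda>w. of_nat (n choose i) * (deriv ^^ i) f w * (deriv ^^ (n-i)) g w) has_field_derivative
         of_nat (n choose i) * (deriv ((deriv ^^ i) f) z * (deriv ^^ (n-i)) g z + deriv ((deriv ^^ (n-i)) g) z * (deriv ^^ i) f z)) (at z)"
      using DERIV_cmult[OF DERIV_mult[OF a b], of "of_nat (n choose i)"]
      by (simp add: algebra_simps)
  qed
  have "((deriv ^^ n) (\<lambda>w. f w * g w) has_field_derivative
         (\<Sum>i = 0..Suc n. (Suc n choose i) * (deriv ^^ i) f z * (deriv ^^ (Suc n - i)) g z))
        (at z)"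
  proof -
    have eqv: "(\<Sum>i = 0..n. of_nat (n choose i) * (deriv ((deriv ^^ i) f) z * (deriv ^^ (n-i)) g z + deriv ((deriv ^^ (n-i)) g) z * (deriv ^^ i) f z))
       = (\<Sum>i = 0..Suc n. (Suc n choose i) * (deriv ^^ i) f z * (deriv ^^ (Suc n - i)) g z)"
      unfolding sumeq by (simp add: algebra_simps sum.distrib)
    show ?thesis
      apply (rule has_field_derivative_transform_within_open[OF _ assms(1) Suc.prems(3)])
      using d eqv apply simp
      using Suc.IH[OF fS] by simp
  qed
  then show ?case
    unfolding funpow.simps o_apply
    by (simp add: DERIV_imp_deriv)
qed


lemma Ck_chain:
  assumes "open S" "\<And>k x. x \<in> S \<Longrightarrow> (h k has_real_derivative h (Suc k) x) (at x)"
  shows "Ck n S (h j) \<and> (\<forall>x\<in>S. (deriv ^^ n) (h j) x = h (j + n) x)"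
proof (induction n arbitrary: j)
  case 0 then show ?case by simp
next
  case (Suc n)
  have e: "(deriv ^^ Suc n) f = (deriv ^^ n) (deriv f)" for f
    by (simp add: funpow_Suc_right del: funpow.simps)
  have d: "deriv (h j) x = h (Suc j) x" if "x \<in> S" for x
    using assms(2)[OF that] by (rule DERIV_imp_deriv)
  have "Ck (Suc n) S (h j)"
    using Suc[of "Suc j"] assms by (intro Ck_from_deriv[where f'="h (Suc j)"]) auto
  moreover have "(deriv ^^ Suc n) (h j) x = h (j + Suc n) x" if "x \<in> S" for x
  proof -
    have "(deriv ^^ Suc n) (h j) x = (deriv ^^ n) (h (Suc j)) x"
      unfolding e by (rule deriv_eq_on[OF assms(1) d that])
    also have "\<dots> = h (j + Suc n) x" using Suc[of "Suc j"] that by simp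
    finally show ?thesis .
  qed
  ultimately show ?case by blast
qed

lemma rec_deriv:
  assumes "open S" "\<And>k. Ck k S N" "\<And>k. Ck k S G" "\<And>x. x \<in> S \<Longrightarrow> deriv N x = N x * deriv G x" "x \<in> S"
  shows "(deriv ^^ Suc m) N x = (\<Sum>i = 0..m. of_nat (m choose i) * (deriv ^^ i) N x * (deriv ^^ Suc (m - i)) G x)"
proof -
  have e: "(deriv ^^ Suc n) f = (deriv ^^ n) (deriv f)" for f n
    by (simp add: funpow_Suc_right del: funpow.simps)
  have "(deriv ^^ Suc m) N x = (deriv ^^ m) (\<lambda>x. N x * deriv G x) x"
    unfolding e by (rule deriv_eq_on[OF assms(1) assms(4) assms(5)])
  also have "\<dots> = (\<Sum>i = 0..m. of_nat (m choose i) * (deriv ^^ i) N x * (deriv ^^ (m - i)) (deriv G) x)"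
    using assms(3)[of "Suc m"] by (intro higher_deriv_mult_real[OF assms(1) assms(2)] assms(5)) simp
  also have "\<dots> = (\<Sum>i = 0..m. of_nat (m choose i) * (deriv ^^ i) N x * (deriv ^^ Suc (m - i)) G x)"
    by (simp only: e)
  finally show ?thesis .
qed

lemma Ck_id: "open S \<Longrightarrow> Ck k S (\<lambda>x. x)"
  by (cases k) (auto intro!: Ck_from_deriv[where f'="\<lambda>x. 1"] Ck_const)

lemma higher_deriv_const: "(deriv ^^ n) (\<lambda>x. c::real) = (\<lambda>x. if n = 0 then c else 0)"
proof (induction n)
  case 0 then show ?case by simp
next
  case (Suc n)
  have "deriv (\<lambda>x. c'::real) = (\<lambda>x. 0)" for c' by (rule ext) (simp add: DERIV_imp_deriv)
  then show ?case using Suc by simp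
qed

lemma higher_deriv_id: "(deriv ^^ Suc (Suc n)) (\<lambda>x::real. x) = (\<lambda>x. 0)"
proof -
  have e: "(deriv ^^ Suc n) f = (deriv ^^ n) (deriv f)" for f n
    by (simp add: funpow_Suc_right del: funpow.simps)
  have "deriv (\<lambda>x::real. x) = (\<lambda>x. 1)" by (rule ext) (simp add: DERIV_imp_deriv)
  then show ?thesis unfolding e by (simp add: higher_deriv_const)
qed

definition ps :: "(nat \<Rightarrow> real) \<Rightarrow> real \<Rightarrow> real" where
  "ps b s = (\<Sum>n. b n * exp s ^ n)"

lemma conv_radius_nmult: "conv_radius b \<le> conv_radius (\<lambda>n. of_nat n * b n :: real)"
proof (rule conv_radius_geI_ex')
  fix r :: real assume r: "0 < r" "ereal r < conv_radius b"
  obtain K where K: "ereal r < ereal K" "ereal K < conv_radius b" using ereal_dense2[OF r(2)] by auto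
  have sm: "summable (\<lambda>n. b n * x ^ n)" if "norm x < K" for x :: real
    using that K(2) by (intro summable_in_conv_radius) (auto intro: less_trans[where y="ereal K"])
  have "summable (\<lambda>n. diffs b n * r ^ n)"
    by (rule termdiff_converges[where K=K]) (use K r sm in auto)
  from diffs_equiv[OF this] have "summable (\<lambda>n. of_nat n * b n * r ^ (n - Suc 0))"
    by (simp add: sums_iff)
  then have "summable (\<lambda>n. of_nat n * b n * r ^ (n - Suc 0) * r)" by (rule summable_mult2)
  moreover have "of_nat n * b n * r ^ (n - Suc 0) * r = of_nat n * b n * of_real r ^ n" for n
    by (cases n) auto
  ultimately show "summable (\<lambda>n. of_nat n * b n * of_real r ^ n)" by simp
qed

lemma conv_radius_W: "conv_radius b \<le> conv_radius (\<lambda>n. b n * (real n - c) ^ k)"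
proof (induction k)
  case 0 then show ?case by simp
next
  case (Suc k)
  let ?W = "\<lambda>n. b n * (real n - c) ^ k"
  have eq: "(\<lambda>n. b n * (real n - c) ^ Suc k) = (\<lambda>n. of_nat n * ?W n + (- c) * ?W n)"
    by (rule ext) (simp add: algebra_simps)
  have 1: "conv_radius b \<le> conv_radius (\<lambda>n. of_nat n * ?W n :: real)"
    using Suc conv_radius_nmult[of ?W] by (rule order_trans)
  have 2: "conv_radius b \<le> conv_radius (\<lambda>n. (- c) * ?W n :: real)"
    using Suc conv_radius_cmult_left[of "-c" ?W] by (cases "c = 0") auto
  have "conv_radius b \<le> min (conv_radius (\<lambda>n. of_nat n * ?W n :: real)) (conv_radius (\<lambda>n. (- c) * ?W n :: real))"
    using 1 2 by simp
  also have "\<dots> \<le> conv_radius (\<lambda>n. of_nat n * ?W n + (- c) * ?W n)" by (rule conv_radius_add_ge)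
  finally show ?case by (simp only: eq)
qed

lemma ps_summable: "ereal (exp s) < conv_radius b \<Longrightarrow> summable (\<lambda>n. b n * exp s ^ n)"
  by (rule summable_in_conv_radius) simp

lemma ps_abs_summable: "ereal (exp s) < conv_radius b \<Longrightarrow> summable (\<lambda>n. \<bar>b n * exp s ^ n\<bar>)"
  using abs_summable_in_conv_radius[of "exp s" b] by simp

lemma ps_deriv:
  assumes "ereal (exp s) < conv_radius b"
  shows "(ps b has_real_derivative ps (\<lambda>n. of_nat n * b n) s) (at s)"
proof -
  obtain K where K: "ereal (exp s) < ereal K" "ereal K < conv_radius b" using ereal_dense2[OF assms] by auto
  have sm: "summable (\<lambda>n. b n * x ^ n)" if "norm x < K" for x :: real
    using that K(2) by (intro summable_in_conv_radius) (auto intro: less_trans[where y="ereal K"])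
  have d: "((\<lambda>z. \<Sum>n. b n * z ^ n) has_field_derivative (\<Sum>n. diffs b n * exp s ^ n)) (at (exp s))"
    by (rule termdiffs_strong'[where K=K]) (use sm K in auto)
  have sd: "summable (\<lambda>n. diffs b n * exp s ^ n)"
    by (rule termdiff_converges[where K=K]) (use K sm in auto)
  from diffs_equiv[OF sd] have "(\<lambda>n. of_nat n * b n * exp s ^ (n - Suc 0) * exp s) sums ((\<Sum>n. diffs b n * exp s ^ n) * exp s)"
    by (rule sums_mult2)
  moreover have "of_nat n * b n * exp s ^ (n - Suc 0) * exp s = of_nat n * b n * exp s ^ n" for n
    by (cases n) auto
  ultimately have val: "(\<Sum>n. diffs b n * exp s ^ n) * exp s = ps (\<lambda>n. of_nat n * b n) s"
    unfolding ps_def by (simp add: sums_iff)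
  have "((\<lambda>s. \<Sum>n. b n * exp s ^ n) has_real_derivative (\<Sum>n. diffs b n * exp s ^ n) * exp s) (at s)"
    using DERIV_chain2[OF d DERIV_exp] by simp
  then show ?thesis unfolding val by (simp add: ps_def[abs_def])
qed

definition Wt :: "(nat \<Rightarrow> real) \<Rightarrow> real \<Rightarrow> nat \<Rightarrow> nat \<Rightarrow> real" where
  "Wt a c k n = a n * (real n - c) ^ k"

definition hc :: "(nat \<Rightarrow> real) \<Rightarrow> real \<Rightarrow> nat \<Rightarrow> real \<Rightarrow> real" where
  "hc a c k s = exp (- c * s) * ps (Wt a c k) s"

lemma hc_deriv:
  assumes "ereal (exp s) < conv_radius a"
  shows "(hc a c k has_real_derivative hc a c (Suc k) s) (at s)"
proof -
  have cr: "ereal (exp s) < conv_radius (Wt a c k)" "ereal (exp s) < conv_radius (\<lambda>n. of_nat n * Wt a c k n)"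
    using assms conv_radius_W[of a c k] conv_radius_nmult[of "Wt a c k"] unfolding Wt_def[abs_def]
    by (auto intro: less_le_trans)
  have d: "(ps (Wt a c k) has_real_derivative ps (\<lambda>n. of_nat n * Wt a c k n) s) (at s)"
    by (rule ps_deriv[OF cr(1)])
  have "ps (Wt a c (Suc k)) s = ps (\<lambda>n. of_nat n * Wt a c k n) s - c * ps (Wt a c k) s"
  proof -
    have "ps (\<lambda>n. of_nat n * Wt a c k n) s - c * ps (Wt a c k) s
        = (\<Sum>n. of_nat n * Wt a c k n * exp s ^ n - c * (Wt a c k n * exp s ^ n))"
    proof -
      have s1: "summable (\<lambda>n. Wt a c k n * exp s ^ n)" by (rule ps_summable[OF cr(1)])
      have s2: "summable (\<lambda>n. of_nat n * Wt a c k n * exp s ^ n)" using ps_summable[OF cr(2)] by simp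
      have "(\<Sum>n. of_nat n * Wt a c k n * exp s ^ n - c * (Wt a c k n * exp s ^ n))
          = (\<Sum>n. of_nat n * Wt a c k n * exp s ^ n) - (\<Sum>n. c * (Wt a c k n * exp s ^ n))"
        by (rule suminf_diff[OF s2 summable_mult[OF s1], symmetric])
      also have "(\<Sum>n. c * (Wt a c k n * exp s ^ n)) = c * (\<Sum>n. Wt a c k n * exp s ^ n)"
        using suminf_mult[OF s1, of c] by simp
      finally show ?thesis unfolding ps_def by simp
    qed
    also have "\<dots> = ps (Wt a c (Suc k)) s" unfolding ps_def Wt_def by (simp add: algebra_simps)
    finally show ?thesis by simp
  qed
  then have eq2: "ps (\<lambda>n. of_nat n * Wt a c k n) s = ps (Wt a c (Suc k)) s + c * ps (Wt a c k) s"
    by simp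
  show ?thesis unfolding hc_def[abs_def]
    by (rule derivative_eq_intros d refl)+ (simp add: eq2 algebra_simps)
qed

definition Sset :: "(nat \<Rightarrow> real) \<Rightarrow> real set" where
  "Sset a = {s. ereal (exp s) < conv_radius a}"

lemma open_Sset: "open (Sset a)"
  unfolding Sset_def by (rule open_Collect_less) (auto intro!: continuous_intros)

lemma hc_chain:
  "Ck n (Sset a) (hc a c j) \<and> (\<forall>x\<in>Sset a. (deriv ^^ n) (hc a c j) x = hc a c (j + n) x)"
  by (rule Ck_chain[OF open_Sset]) (auto simp: Sset_def intro: hc_deriv)


lemma Wt0[simp]: "Wt a c 0 = a" by (rule ext) (simp add: Wt_def)

lemma cr_Wt: "ereal (exp s) < conv_radius a \<Longrightarrow> ereal (exp s) < conv_radius (Wt a c k)"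
  using conv_radius_W[of a c k] unfolding Wt_def[abs_def] by (auto intro: less_le_trans)

lemma ps_lin:
  assumes "ereal (exp s) < conv_radius f" "ereal (exp s) < conv_radius g"
  shows "ps (\<lambda>n. f n - c * g n) s = ps f s - c * ps g s"
proof -
  have s1: "summable (\<lambda>n. f n * exp s ^ n)" "summable (\<lambda>n. g n * exp s ^ n)"
    using ps_summable assms by auto
  have "(\<Sum>n. f n * exp s ^ n - c * (g n * exp s ^ n)) = (\<Sum>n. f n * exp s ^ n) - (\<Sum>n. c * (g n * exp s ^ n))"
    by (rule suminf_diff[OF s1(1) summable_mult[OF s1(2)], symmetric])
  also have "(\<Sum>n. c * (g n * exp s ^ n)) = c * (\<Sum>n. g n * exp s ^ n)"
    using suminf_mult[OF s1(2), of c] by simp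
  finally show ?thesis unfolding ps_def by (simp add: algebra_simps)
qed

lemma classK_pos: "classK a \<Longrightarrow> ereal (exp s) < conv_radius a \<Longrightarrow> ps a s > 0"
proof -
  assume K: "classK a" and s: "ereal (exp s) < conv_radius a"
  have nn: "\<And>n. 0 \<le> a n * exp s ^ n" using K unfolding classK_def by auto
  have "(\<Sum>n<1. a n * exp s ^ n) \<le> (\<Sum>n. a n * exp s ^ n)"
    by (rule sum_le_suminf[OF ps_summable[OF s]]) (use nn in auto)
  then show ?thesis using K unfolding classK_def ps_def by auto
qed

lemma psum_ps: "psum a (exp s) = ps a s" unfolding psum_def ps_def by simp

lemma fulcrum_ps: "fulcrum a = (\<lambda>s. ln (ps a s))" unfolding fulcrum_def[abs_def] psum_ps by simp

lemma hc0: "hc a 0 k s = ps (Wt a 0 k) s" unfolding hc_def by simp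

lemma Wt01: "(\<lambda>n. of_nat n * a n) = Wt a 0 1" by (rule ext) (simp add: Wt_def)

context
  fixes a :: "nat \<Rightarrow> real"
  assumes K: "classK a"
begin

lemma fulcrum_deriv:
  assumes "s \<in> Sset a"
  shows "(fulcrum a has_real_derivative ps (Wt a 0 1) s / ps a s) (at s)"
proof -
  have s: "ereal (exp s) < conv_radius a" using assms by (simp add: Sset_def)
  have "(ps a has_real_derivative ps (Wt a 0 1) s) (at s)" using ps_deriv[OF s] by (simp add: Wt01)
  then show ?thesis unfolding fulcrum_ps using classK_pos[OF K s]
    by (auto intro!: derivative_eq_intros simp: field_simps)
qed

lemma fulcrum_smooth: "Ck k (Sset a) (fulcrum a)"
proof (cases k)
  case 0 then show ?thesis by simp
next
  case (Suc k')
  have "Ck k' (Sset a) (\<lambda>s. hc a 0 1 s * inverse (hc a 0 0 s))"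
  proof (intro Ck_mult Ck_inverse open_Sset)
    show "Ck k' (Sset a) (hc a 0 1)" using hc_chain by blast
    show "Ck k' (Sset a) (hc a 0 0)" using hc_chain by blast
    show "hc a 0 0 x \<noteq> 0" if "x \<in> Sset a" for x
    proof -
      have "ps a x > 0" using classK_pos[OF K] that by (simp add: Sset_def)
      then show ?thesis by (simp add: hc0)
    qed
  qed
  then have "Ck k' (Sset a) (\<lambda>s. ps (Wt a 0 1) s / ps a s)" by (simp add: hc0 field_simps)
  then show ?thesis unfolding Suc
    by (intro Ck_from_deriv[OF open_Sset, where f'="\<lambda>s. ps (Wt a 0 1) s / ps a s"] fulcrum_deriv)
qed

definition Gc :: "real \<Rightarrow> real \<Rightarrow> real" where
  "Gc c s = fulcrum a s + (- c) * s"

lemma Gc_smooth: "Ck k (Sset a) (Gc c)"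
  unfolding Gc_def[abs_def]
  by (intro Ck_add Ck_cmult Ck_id fulcrum_smooth open_Sset)

lemma Gc_higher:
  assumes "x \<in> Sset a"
  shows "(deriv ^^ n) (Gc c) x = (deriv ^^ n) (fulcrum a) x + (- c) * (deriv ^^ n) (\<lambda>s. s) x"
  unfolding Gc_def[abs_def]
  by (subst higher_deriv_add[OF open_Sset fulcrum_smooth Ck_cmult[OF open_Sset Ck_id[OF open_Sset]] assms])
     (simp add: higher_deriv_cmult[OF open_Sset Ck_id[OF open_Sset] assms])

lemma Gc_higher2:
  assumes "x \<in> Sset a" "x0 \<in> Sset a" "c = deriv (fulcrum a) x0"
  shows "(deriv ^^ Suc j) (Gc c) x0 = (if j = 0 then 0 else (deriv ^^ Suc j) (fulcrum a) x0)"
proof (cases j)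
  case 0
  have "deriv (\<lambda>s::real. s) x0 = 1" by (simp add: DERIV_imp_deriv)
  then show ?thesis using Gc_higher[OF assms(2), of 1] 0 assms(3) by simp
next
  case (Suc j')
  then show ?thesis using Gc_higher[OF assms(2), of "Suc (Suc j')"] by (simp add: higher_deriv_id del: funpow.simps)
qed

definition cmom :: "real \<Rightarrow> nat \<Rightarrow> real \<Rightarrow> real" where
  "cmom c k s = ps (Wt a c k) s / ps a s"

lemma central_rec:
  assumes x0: "x0 \<in> Sset a" and c: "c = deriv (fulcrum a) x0"
  shows "cmom c (Suc m) x0 = (\<Sum>i = 0..m. of_nat (m choose i) * cmom c i x0 *
             (if m - i = 0 then 0 else (deriv ^^ Suc (m - i)) (fulcrum a) x0))"
proof -
  let ?N = "hc a c 0"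
  have x0': "ereal (exp x0) < conv_radius a" using x0 by (simp add: Sset_def)
  have dG: "deriv (Gc c) x = ps (Wt a 0 1) x / ps a x - c" if "x \<in> Sset a" for x
  proof -
    have "(Gc c has_real_derivative ps (Wt a 0 1) x / ps a x - c) (at x)"
      unfolding Gc_def[abs_def] using fulcrum_deriv[OF that]
      by (auto intro!: derivative_eq_intros)
    then show ?thesis by (rule DERIV_imp_deriv)
  qed
  have dN: "deriv ?N x = ?N x * deriv (Gc c) x" if "x \<in> Sset a" for x
  proof -
    have xs: "ereal (exp x) < conv_radius a" using that by (simp add: Sset_def)
    have "deriv ?N x = hc a c 1 x" using hc_chain[of 1 a c 0] that by simp
    also have "Wt a c 1 = (\<lambda>n. Wt a 0 1 n - c * a n)" by (rule ext) (simp add: Wt_def algebra_simps)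
    then have "hc a c 1 x = exp (- c * x) * (ps (Wt a 0 1) x - c * ps a x)"
      unfolding hc_def by (simp add: ps_lin[OF cr_Wt[OF xs] xs])
    also have "\<dots> = ?N x * deriv (Gc c) x"
      using classK_pos[OF K xs] unfolding dG[OF that] hc_def by (simp add: field_simps)
    finally show ?thesis .
  qed
  have rec: "(deriv ^^ Suc m) ?N x0 = (\<Sum>i = 0..m. of_nat (m choose i) * (deriv ^^ i) ?N x0 * (deriv ^^ Suc (m - i)) (Gc c) x0)"
    using hc_chain Gc_smooth dN x0 by (intro rec_deriv[OF open_Sset]) auto
  have hN: "(deriv ^^ i) ?N x0 = hc a c i x0" for i using hc_chain[of i a c 0] x0 by simp
  have pos: "hc a c 0 x0 > 0" using classK_pos[OF K x0'] by (simp add: hc_def)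
  have cm: "cmom c i x0 = hc a c i x0 / hc a c 0 x0" for i
    unfolding cmom_def hc_def by simp
  have "cmom c (Suc m) x0 = (\<Sum>i = 0..m. of_nat (m choose i) * hc a c i x0 * (deriv ^^ Suc (m - i)) (Gc c) x0) / hc a c 0 x0"
    using rec pos by (simp add: hN cm del: funpow.simps)
  also have "\<dots> = (\<Sum>i = 0..m. of_nat (m choose i) * cmom c i x0 * (deriv ^^ Suc (m - i)) (Gc c) x0)"
    by (simp add: sum_divide_distrib cm)
  also have "\<dots> = (\<Sum>i = 0..m. of_nat (m choose i) * cmom c i x0 *
             (if m - i = 0 then 0 else (deriv ^^ Suc (m - i)) (fulcrum a) x0))"
    by (intro sum.cong refl) (simp add: Gc_higher2[OF x0 x0 c] del: funpow.simps)
  finally show ?thesis .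
qed

end

lemma powr_half_k: "0 < x \<Longrightarrow> x powr (real k / 2) = sqrt x ^ k"
proof -
  assume x: "0 < x"
  have "sqrt x ^ k = (x powr (1/2)) ^ k" using x by (simp add: powr_half_sqrt)
  also have "\<dots> = x powr (1/2 * real k)" using x by (simp add: powr_realpow[symmetric] powr_powr)
  finally show ?thesis by simp
qed

context
  fixes a :: "nat \<Rightarrow> real"
  assumes K: "classK a"
begin

lemma mean_eq:
  assumes "s \<in> Sset a"
  shows "mean_f a (exp s) = deriv (fulcrum a) s"
proof -
  have s: "ereal (exp s) < conv_radius a" using assms by (simp add: Sset_def)
  have sm: "summable (\<lambda>n. Wt a 0 1 n * exp s ^ n)" by (rule ps_summable[OF cr_Wt[OF s]])
  have "mean_f a (exp s) = (\<Sum>n. Wt a 0 1 n * exp s ^ n / ps a s)"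
    unfolding mean_f_def psum_ps by (simp add: Wt_def mult_ac)
  also have "\<dots> = ps (Wt a 0 1) s / ps a s" unfolding ps_def using suminf_divide[OF sm] by simp
  also have "\<dots> = deriv (fulcrum a) s" using fulcrum_deriv[OF K assms] by (simp add: DERIV_imp_deriv)
  finally show ?thesis .
qed

lemma cmom_eq:
  assumes "s \<in> Sset a"
  shows "cmom a c k s = (\<Sum>n. (real n - c) ^ k * (a n * exp s ^ n / psum a (exp s)))"
proof -
  have s: "ereal (exp s) < conv_radius a" using assms by (simp add: Sset_def)
  have sm: "summable (\<lambda>n. Wt a c k n * exp s ^ n)" by (rule ps_summable[OF cr_Wt[OF s]])
  have "(\<Sum>n. (real n - c) ^ k * (a n * exp s ^ n / psum a (exp s))) = (\<Sum>n. Wt a c k n * exp s ^ n / ps a s)"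
    unfolding psum_ps by (simp add: Wt_def mult_ac)
  also have "\<dots> = cmom a c k s" unfolding ps_def cmom_def[OF K] using suminf_divide[OF sm] by simp
  finally show ?thesis by simp
qed

lemma cmom_0: "s \<in> Sset a \<Longrightarrow> cmom a c 0 s = 1"
  unfolding cmom_def[OF K] using classK_pos[OF K, of s] by (simp add: Sset_def)

lemma cmom_1: "s \<in> Sset a \<Longrightarrow> c = deriv (fulcrum a) s \<Longrightarrow> cmom a c 1 s = 0"
  using central_rec[OF K, of s c 0] by simp

lemma cmom_2: "s \<in> Sset a \<Longrightarrow> c = deriv (fulcrum a) s \<Longrightarrow> cmom a c 2 s = (deriv ^^ 2) (fulcrum a) s"
  using central_rec[OF K, of s c 1] cmom_0[of s c] cmom_1[of s c]
  by (simp add: numeral_2_eq_2 del: funpow.simps)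

lemma cmom_2_pos:
  assumes "s \<in> Sset a"
  shows "cmom a c 2 s > 0"
proof -
  have s: "ereal (exp s) < conv_radius a" using assms by (simp add: Sset_def)
  obtain m where m: "m \<ge> 1" "a m \<noteq> 0" using K unfolding classK_def by auto
  have nn: "0 \<le> a n" for n using K unfolding classK_def by auto
  define j where "j = (if c = 0 then m else 0)"
  have "0 < Wt a c 2 j * exp s ^ j"
  proof (cases "c = 0")
    case True
    then have "0 < a m" "0 < (real m - c) ^ 2" using m nn[of m] by (auto simp: less_le)
    then show ?thesis using True unfolding j_def Wt_def by simp
  next
    case False
    then have "0 < a 0" "0 < (real 0 - c) ^ 2" using K unfolding classK_def by auto
    then show ?thesis using False unfolding j_def Wt_def by simp
  qed
  then have "0 < ps (Wt a c 2) s" unfolding ps_def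
    by (intro suminf_pos2[OF ps_summable[OF cr_Wt[OF s]]]) (auto simp: Wt_def nn)
  then show ?thesis unfolding cmom_def[OF K] using classK_pos[OF K s] by simp
qed

definition mu :: "nat \<Rightarrow> real \<Rightarrow> real" where
  "mu k s = (\<Sum>n. ((real n - mean_f a (exp s)) / sigma_f a (exp s)) ^ k * (a n * exp s ^ n / psum a (exp s)))"

definition kap :: "nat \<Rightarrow> real \<Rightarrow> real" where
  "kap k s = (if k = 1 then 0 else (deriv ^^ k) (fulcrum a) s / ((deriv ^^ 2) (fulcrum a) s) powr (real k / 2))"

lemma var_eq:
  assumes "s \<in> Sset a"
  shows "var_f a (exp s) = (deriv ^^ 2) (fulcrum a) s" "(deriv ^^ 2) (fulcrum a) s > 0"
proof -
  show "var_f a (exp s) = (deriv ^^ 2) (fulcrum a) s"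
    unfolding var_f_def using cmom_eq[OF assms, of "mean_f a (exp s)" 2] cmom_2[OF assms] mean_eq[OF assms]
    by simp
  then show "(deriv ^^ 2) (fulcrum a) s > 0"
    using cmom_2_pos[OF assms] cmom_2[OF assms] mean_eq[OF assms] by metis
qed

lemma mu_eq:
  assumes "s \<in> Sset a"
  shows "mu k s = cmom a (deriv (fulcrum a) s) k s / sqrt ((deriv ^^ 2) (fulcrum a) s) ^ k"
proof -
  let ?c = "deriv (fulcrum a) s" and ?sg = "sqrt ((deriv ^^ 2) (fulcrum a) s)"
  have s: "ereal (exp s) < conv_radius a" using assms by (simp add: Sset_def)
  have sg: "sigma_f a (exp s) = ?sg" unfolding sigma_f_def var_eq[OF assms] ..
  have sm: "summable (\<lambda>n. (real n - ?c) ^ k * (a n * exp s ^ n / psum a (exp s)))"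
    using summable_divide[OF ps_summable[OF cr_Wt[OF s], of ?c k], of "ps a s"] unfolding psum_ps Wt_def
    by (simp add: mult_ac)
  have "mu k s = (\<Sum>n. (real n - ?c) ^ k * (a n * exp s ^ n / psum a (exp s)) / ?sg ^ k)"
    unfolding mu_def mean_eq[OF assms] sg by (simp add: power_divide mult_ac)
  also have "\<dots> = cmom a ?c k s / ?sg ^ k"
    unfolding cmom_eq[OF assms] using suminf_divide[OF sm] by simp
  finally show ?thesis .
qed

lemma mu_0: "s \<in> Sset a \<Longrightarrow> mu 0 s = 1"
  using mu_eq[of s 0] cmom_0[of s] by simp

lemma kap_2: "s \<in> Sset a \<Longrightarrow> kap 2 s = 1"
  using var_eq(2)[of s] unfolding kap_def by simp

lemma kap_1: "kap 1 s = 0" unfolding kap_def by simp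

lemma mu_rec:
  assumes "s \<in> Sset a"
  shows "mu (Suc m) s = (\<Sum>i = 0..m. of_nat (m choose i) * mu i s * kap (Suc (m - i)) s)"
proof -
  let ?c = "deriv (fulcrum a) s" and ?v = "(deriv ^^ 2) (fulcrum a) s"
  let ?sg = "sqrt ?v"
  have v: "?v > 0" using var_eq(2)[OF assms] .
  have sg: "?sg > 0" using v by simp
  have kp: "kap (Suc j) s = (if j = 0 then 0 else (deriv ^^ Suc j) (fulcrum a) s / ?sg ^ Suc j)" for j
    unfolding kap_def using powr_half_k[OF v, of "Suc j"] by (simp del: funpow.simps)
  have "mu (Suc m) s = cmom a ?c (Suc m) s / ?sg ^ Suc m" by (rule mu_eq[OF assms])
  also have "\<dots> = (\<Sum>i = 0..m. of_nat (m choose i) * cmom a ?c i s *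
             (if m - i = 0 then 0 else (deriv ^^ Suc (m - i)) (fulcrum a) s)) / ?sg ^ Suc m"
    by (subst central_rec[OF K assms refl]) simp
  also have "\<dots> = (\<Sum>i = 0..m. of_nat (m choose i) * mu i s * kap (Suc (m - i)) s)"
    unfolding sum_divide_distrib
  proof (intro sum.cong refl)
    fix i assume i: "i \<in> {0..m}"
    have e: "?sg ^ Suc m = ?sg ^ i * ?sg ^ Suc (m - i)"
      using i by (simp add: power_add[symmetric] Suc_diff_le)
    have aux: "P * A * (if b then 0 else D) / (x * y) = P * (A / x) * (if b then 0 else D / y)" for P A D x y :: real and b
      by simp
    show "of_nat (m choose i) * cmom a ?c i s *
             (if m - i = 0 then 0 else (deriv ^^ Suc (m - i)) (fulcrum a) s) / ?sg ^ Suc m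
        = of_nat (m choose i) * mu i s * kap (Suc (m - i)) s"
      apply (subst e)
      apply (subst kp)
      apply (subst mu_eq[OF assms])
      apply (rule aux)
      done
  qed
  finally show ?thesis .
qed

end

fun nu :: "nat \<Rightarrow> real" where
  "nu 0 = 1"
| "nu (Suc 0) = 0"
| "nu (Suc (Suc m)) = real (Suc m) * nu m"

definition klim :: "nat \<Rightarrow> real" where "klim j = (if j = 2 then 1 else 0)"

lemma nu_rec: "nu (Suc m) = (\<Sum>i = 0..m. of_nat (m choose i) * nu i * klim (Suc (m - i)))"
proof (cases m)
  case 0 then show ?thesis by (simp add: klim_def)
next
  case (Suc m')
  have "(\<Sum>i = 0..m. of_nat (m choose i) * nu i * klim (Suc (m - i)))
      = (\<Sum>i = 0..m. if i = m' then of_nat (m choose i) * nu i else 0)"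
    by (intro sum.cong refl) (auto simp: klim_def Suc)
  also have "\<dots> = of_nat (m choose m') * nu m'" using Suc by (simp add: sum.delta)
  also have "\<dots> = nu (Suc m)" using Suc by simp
  finally show ?thesis by simp
qed

definition bnd :: "'a filter \<Rightarrow> ('a \<Rightarrow> real) \<Rightarrow> bool" where
  "bnd F f \<longleftrightarrow> (\<exists>B. eventually (\<lambda>s. \<bar>f s\<bar> \<le> B) F)"

lemma bnd_const: "bnd F (\<lambda>s. c)"
  unfolding bnd_def by (intro exI[of _ "\<bar>c\<bar>"]) simp

lemma bnd_add: "bnd F f \<Longrightarrow> bnd F g \<Longrightarrow> bnd F (\<lambda>s. f s + g s)"
  unfolding bnd_def
proof (elim exE)
  fix B1 B2 assume "eventually (\<lambda>s. \<bar>f s\<bar> \<le> B1) F" "eventually (\<lambda>s. \<bar>g s\<bar> \<le> B2) F"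
  then have "eventually (\<lambda>s. \<bar>f s + g s\<bar> \<le> B1 + B2) F"
    by eventually_elim (rule order_trans[OF abs_triangle_ineq], simp)
  then show "\<exists>B. eventually (\<lambda>s. \<bar>f s + g s\<bar> \<le> B) F" by blast
qed

lemma bnd_mult: "bnd F f \<Longrightarrow> bnd F g \<Longrightarrow> bnd F (\<lambda>s. f s * g s)"
  unfolding bnd_def
proof (elim exE)
  fix B1 B2 assume "eventually (\<lambda>s. \<bar>f s\<bar> \<le> B1) F" "eventually (\<lambda>s. \<bar>g s\<bar> \<le> B2) F"
  then have "eventually (\<lambda>s. \<bar>f s * g s\<bar> \<le> B1 * B2) F"
    by eventually_elim (simp add: abs_mult mult_mono')
  then show "\<exists>B. eventually (\<lambda>s. \<bar>f s * g s\<bar> \<le> B) F" by blast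
qed

lemma bnd_sum: "finite I \<Longrightarrow> (\<And>i. i \<in> I \<Longrightarrow> bnd F (f i)) \<Longrightarrow> bnd F (\<lambda>s. \<Sum>i\<in>I. f i s)"
  by (induction I rule: finite_induct) (auto intro: bnd_add bnd_const)

lemma bnd_ev: "bnd F f \<Longrightarrow> eventually (\<lambda>s. f s = g s) F \<Longrightarrow> bnd F g"
  unfolding bnd_def
proof (elim exE)
  fix B assume "eventually (\<lambda>s. \<bar>f s\<bar> \<le> B) F" "eventually (\<lambda>s. f s = g s) F"
  then have "eventually (\<lambda>s. \<bar>g s\<bar> \<le> B) F" by eventually_elim simp
  then show "\<exists>B. eventually (\<lambda>s. \<bar>g s\<bar> \<le> B) F" by blast
qed

locale cumrec =
  fixes F :: "'a filter" and mu kap :: "nat \<Rightarrow> 'a \<Rightarrow> real"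
  assumes rec_ev: "eventually (\<lambda>s. (\<forall>m. mu (Suc m) s = (\<Sum>i = 0..m. of_nat (m choose i) * mu i s * kap (Suc (m - i)) s))
      \<and> mu 0 s = 1 \<and> kap 1 s = 0 \<and> kap 2 s = 1) F"
begin

lemma ev_rec: "eventually (\<lambda>s. mu (Suc m) s = (\<Sum>i = 0..m. of_nat (m choose i) * mu i s * kap (Suc (m - i)) s)) F"
  using rec_ev by eventually_elim blast

lemma bounded_mu:
  assumes "\<And>k. k \<ge> 3 \<Longrightarrow> bnd F (kap k)"
  shows "bnd F (mu m)"
proof -
  have bk: "bnd F (kap k)" if "k \<ge> 1" for k
  proof -
    have "k = 1 \<or> k = 2 \<or> k \<ge> 3" using that by arith
    then consider "k = 1" | "k = 2" | "k \<ge> 3" by blast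
    then show ?thesis
    proof cases
      case 1
      have "eventually (\<lambda>s. 0 = kap k s) F" using rec_ev by eventually_elim (simp add: 1)
      then show ?thesis using bnd_const bnd_ev by blast
    next
      case 2
      have "eventually (\<lambda>s. 1 = kap k s) F" using rec_ev by eventually_elim (simp add: 2)
      then show ?thesis using bnd_const bnd_ev by blast
    qed (use assms in auto)
  qed
  show ?thesis
  proof (induction m rule: less_induct)
    case (less m)
    show ?case
    proof (cases m)
      case 0
      have "eventually (\<lambda>s. 1 = mu m s) F" using rec_ev by eventually_elim (simp add: 0)
      then show ?thesis using bnd_const bnd_ev by blast
    next
      case (Suc m')
      have "bnd F (\<lambda>s. \<Sum>i = 0..m'. of_nat (m' choose i) * mu i s * kap (Suc (m' - i)) s)"
        using less Suc by (intro bnd_sum bnd_mult bnd_const bk) auto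
      moreover have "eventually (\<lambda>s. (\<Sum>i = 0..m'. of_nat (m' choose i) * mu i s * kap (Suc (m' - i)) s) = mu (Suc m') s) F"
        using ev_rec[of m'] by (rule eventually_mono) simp
      ultimately show ?thesis unfolding Suc by (rule bnd_ev)
    qed
  qed
qed

lemma kap_lim_small:
  "j = 1 \<or> j = 2 \<Longrightarrow> (kap j \<longlongrightarrow> klim j) F"
proof -
  assume j: "j = 1 \<or> j = 2"
  have "eventually (\<lambda>s. klim j = kap j s) F"
    using rec_ev by eventually_elim (use j in \<open>auto simp: klim_def\<close>)
  then show ?thesis by (rule Lim_transform_eventually[OF tendsto_const])
qed

lemma mu_lim:
  assumes "\<And>k. k \<ge> 3 \<Longrightarrow> (kap k \<longlongrightarrow> 0) F"
  shows "(mu m \<longlongrightarrow> nu m) F"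
proof -
  have kl: "(kap j \<longlongrightarrow> klim j) F" if "j \<ge> 1" for j
  proof -
    have "(j = 1 \<or> j = 2) \<or> j \<ge> 3" using that by arith
    then consider "j = 1 \<or> j = 2" | "j \<ge> 3" by blast
    then show ?thesis
    proof cases
      case 2 then show ?thesis using assms[OF 2] by (simp add: klim_def)
    qed (rule kap_lim_small)
  qed
  show ?thesis
  proof (induction m rule: less_induct)
    case (less m)
    show ?case
    proof (cases m)
      case 0
      have "eventually (\<lambda>s. 1 = mu m s) F" using rec_ev by eventually_elim (simp add: 0)
      then show ?thesis using 0 by (auto intro: Lim_transform_eventually[OF tendsto_const])
    next
      case (Suc m')
      have "((\<lambda>s. \<Sum>i = 0..m'. of_nat (m' choose i) * mu i s * kap (Suc (m' - i)) s) \<longlongrightarrow>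
            (\<Sum>i = 0..m'. of_nat (m' choose i) * nu i * klim (Suc (m' - i)))) F"
        using less Suc by (intro tendsto_sum tendsto_mult tendsto_const kl) auto
      then have "((\<lambda>s. \<Sum>i = 0..m'. of_nat (m' choose i) * mu i s * kap (Suc (m' - i)) s) \<longlongrightarrow> nu m) F"
        unfolding Suc nu_rec[symmetric] .
      then show ?thesis
        by (rule Lim_transform_eventually) (use ev_rec[of m'] Suc in \<open>auto elim: eventually_mono\<close>)
    qed
  qed
qed

lemma kap_lim:
  assumes "\<And>m. (mu m \<longlongrightarrow> nu m) F" and k1: "k \<ge> 1"
  shows "(kap k \<longlongrightarrow> klim k) F"
  using k1
proof (induction k rule: less_induct)
  case (less k)
  have "(k = 1 \<or> k = 2) \<or> k \<ge> 3" using less.prems by arith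
  then consider "k = 1 \<or> k = 2" | "k \<ge> 3" by blast
  then show ?case
  proof cases
    case 1 then show ?thesis by (rule kap_lim_small)
  next
    case 2
    then obtain m where m: "k = Suc m" "m \<ge> 2" by (cases k) auto
    have sp: "(\<Sum>i = 0..m. f i) = f 0 + (\<Sum>i = Suc 0..m. f i)" for f :: "nat \<Rightarrow> real"
      by (rule sum.atLeast_Suc_atMost) simp
    have ev: "eventually (\<lambda>s. kap k s = mu (Suc m) s - (\<Sum>i = 1..m. of_nat (m choose i) * mu i s * kap (Suc (m - i)) s)) F"
      using rec_ev
    proof eventually_elim
      case (elim s)
      then have "mu (Suc m) s = (\<Sum>i = 0..m. of_nat (m choose i) * mu i s * kap (Suc (m - i)) s)" by blast
      also have "\<dots> = of_nat (m choose 0) * mu 0 s * kap (Suc (m - 0)) s + (\<Sum>i = Suc 0..m. of_nat (m choose i) * mu i s * kap (Suc (m - i)) s)"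
        by (rule sp)
      finally show ?case using elim m(1) by simp
    qed
    have terms: "((\<lambda>s. of_nat (m choose i) * mu i s * kap (Suc (m - i)) s) \<longlongrightarrow>
          of_nat (m choose i) * nu i * klim (Suc (m - i))) F" if i: "i \<in> {1..m}" for i
    proof -
      have a: "(kap (Suc (m - i)) \<longlongrightarrow> klim (Suc (m - i))) F"
        by (rule less.IH) (use i m in auto)
      show ?thesis by (intro tendsto_mult tendsto_const assms a)
    qed
    have T: "((\<lambda>s. mu (Suc m) s - (\<Sum>i = 1..m. of_nat (m choose i) * mu i s * kap (Suc (m - i)) s)) \<longlongrightarrow>
          nu (Suc m) - (\<Sum>i = 1..m. of_nat (m choose i) * nu i * klim (Suc (m - i)))) F"
      by (intro tendsto_diff tendsto_sum assms terms)
    have eq: "nu (Suc m) - (\<Sum>i = 1..m. of_nat (m choose i) * nu i * klim (Suc (m - i))) = klim k"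
      using nu_rec[of m] sp[of "\<lambda>i. of_nat (m choose i) * nu i * klim (Suc (m - i))"] m(1) by simp
    have ev': "eventually (\<lambda>s. mu (Suc m) s - (\<Sum>i = 1..m. of_nat (m choose i) * mu i s * kap (Suc (m - i)) s) = kap k s) F"
      using ev by (rule eventually_mono) simp
    show ?thesis using Lim_transform_eventually[OF T ev'] unfolding eq .
  qed
qed

end

definition pp :: "(nat \<Rightarrow> real) \<Rightarrow> real \<Rightarrow> nat \<Rightarrow> real" where
  "pp a s n = a n * exp s ^ n / psum a (exp s)"

definition Pd :: "(nat \<Rightarrow> real) \<Rightarrow> real \<Rightarrow> nat measure" where
  "Pd a s = density (count_space UNIV) (\<lambda>n. ennreal (pp a s n))"

definition Xv :: "(nat \<Rightarrow> real) \<Rightarrow> real \<Rightarrow> nat \<Rightarrow> real" where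
  "Xv a s n = (real n - mean_f a (exp s)) / sigma_f a (exp s)"

definition Dist :: "(nat \<Rightarrow> real) \<Rightarrow> real \<Rightarrow> real measure" where
  "Dist a s = (if s \<in> Sset a then distr (Pd a s) borel (Xv a s) else std_normal_distribution)"

lemma Phi_cdf: "Phi x = cdf std_normal_distribution x"
  unfolding Phi_def cdf_def by simp

lemma isCont_Phi: "isCont (cdf std_normal_distribution) x"
proof -
  interpret real_distribution std_normal_distribution by (rule real_dist_normal_dist)
  have "AE y in lborel. y \<in> {x} \<longrightarrow> ennreal (std_normal_density y) = 0"
    using AE_lborel_singleton[of x] by eventually_elim auto
  then have "{x} \<in> null_sets std_normal_distribution"
    by (subst null_sets_density_iff) auto
  then have "measure std_normal_distribution {x} = 0" by (simp add: measure_def null_setsD1)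
  then show ?thesis by (simp add: isCont_cdf)
qed

context
  fixes a :: "nat \<Rightarrow> real"
  assumes K: "classK a"
begin

lemma pp_nonneg: "s \<in> Sset a \<Longrightarrow> 0 \<le> pp a s n"
  using K classK_pos[OF K, of s] unfolding pp_def classK_def psum_ps Sset_def by auto

lemma pp_abs_summable:
  assumes "s \<in> Sset a"
  shows "summable (\<lambda>n. \<bar>(real n - c) ^ k\<bar> * pp a s n)"
proof -
  have s: "ereal (exp s) < conv_radius a" using assms by (simp add: Sset_def)
  have "summable (\<lambda>n. \<bar>Wt a c k n * exp s ^ n\<bar> / ps a s)"
    using ps_abs_summable[OF cr_Wt[OF s]] by (rule summable_divide)
  moreover have "\<bar>Wt a c k n * exp s ^ n\<bar> / ps a s = \<bar>(real n - c) ^ k\<bar> * pp a s n" for n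
    using pp_nonneg[OF assms, of n] classK_pos[OF K s] K unfolding pp_def Wt_def psum_ps classK_def
    by (simp add: abs_mult)
  ultimately show ?thesis by simp
qed

lemma pp_summable: "s \<in> Sset a \<Longrightarrow> summable (pp a s)"
  using pp_abs_summable[of s 0 0] by simp

lemma pp_sum: "s \<in> Sset a \<Longrightarrow> (\<Sum>n. pp a s n) = 1"
  using cmom_0[OF K, of s 0] cmom_eq[OF K, of s 0 0] unfolding pp_def by simp

lemma prob_Pd: "s \<in> Sset a \<Longrightarrow> prob_space (Pd a s)"
proof (rule prob_spaceI)
  assume s: "s \<in> Sset a"
  have "emeasure (Pd a s) (space (Pd a s)) = (\<integral>\<^sup>+ n. ennreal (pp a s n) \<partial>count_space UNIV)"
    unfolding Pd_def by (simp add: emeasure_density)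
  also have "\<dots> = (\<Sum>n. ennreal (pp a s n))" by (rule nn_integral_count_space_nat)
  also have "\<dots> = ennreal (\<Sum>n. pp a s n)" using pp_nonneg[OF s] pp_summable[OF s] by (rule suminf_ennreal2)
  also have "\<dots> = 1" using pp_sum[OF s] by simp
  finally show "emeasure (Pd a s) (space (Pd a s)) = 1" .
qed

lemma real_dist_Dist: "real_distribution (Dist a s)"
  unfolding Dist_def using prob_Pd[of s] real_dist_normal_dist
  by (auto intro!: prob_space.real_distribution_distr simp: Pd_def)

lemma Dist_moment:
  assumes s: "s \<in> Sset a"
  shows "integrable (Dist a s) (\<lambda>x. x ^ k)" "integral\<^sup>L (Dist a s) (\<lambda>x. x ^ k) = mu a k s"
proof -
  let ?c = "mean_f a (exp s)" and ?sg = "sigma_f a (exp s)"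
  have meas: "Xv a s \<in> Pd a s \<rightarrow>\<^sub>M borel" unfolding Pd_def by simp
  have D: "Dist a s = distr (Pd a s) borel (Xv a s)" using s by (simp add: Dist_def)
  have sm: "summable (\<lambda>n. norm (pp a s n *\<^sub>R (Xv a s n ^ k)))"
  proof -
    have "summable (\<lambda>n. \<bar>(real n - ?c) ^ k\<bar> * pp a s n / \<bar>?sg\<bar> ^ k)"
      by (rule summable_divide[OF pp_abs_summable[OF s]])
    moreover have "\<bar>(real n - ?c) ^ k\<bar> * pp a s n / \<bar>?sg\<bar> ^ k = norm (pp a s n *\<^sub>R (Xv a s n ^ k))" for n
      using pp_nonneg[OF s, of n] by (simp add: Xv_def abs_mult power_divide power_abs)
    ultimately show ?thesis by simp
  qed
  have int: "integrable (count_space UNIV) (\<lambda>n. pp a s n *\<^sub>R (Xv a s n ^ k))"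
    unfolding integrable_count_space_nat_iff using sm by simp
  show "integrable (Dist a s) (\<lambda>x. x ^ k)"
    unfolding D Pd_def
    using int by (subst integrable_distr_eq) (auto simp: integrable_density pp_nonneg[OF s])
  have "integral\<^sup>L (Dist a s) (\<lambda>x. x ^ k) = integral\<^sup>L (Pd a s) (\<lambda>n. Xv a s n ^ k)"
    unfolding D by (rule integral_distr[OF meas]) simp
  also have "\<dots> = integral\<^sup>L (count_space UNIV) (\<lambda>n. pp a s n *\<^sub>R (Xv a s n ^ k))"
    unfolding Pd_def by (rule integral_density) (auto simp: pp_nonneg[OF s])
  also have "\<dots> = (\<Sum>n. pp a s n *\<^sub>R (Xv a s n ^ k))" by (rule integral_count_space_nat[OF int])
  also have "\<dots> = mu a k s" unfolding mu_def[OF K] Xv_def pp_def by (simp add: mult_ac)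
  finally show "integral\<^sup>L (Dist a s) (\<lambda>x. x ^ k) = mu a k s" .
qed

lemma Dist_cdf:
  assumes s: "s \<in> Sset a"
  shows "cdf (Dist a s) x = prob_X a (exp s) {n. (real n - mean_f a (exp s)) / sigma_f a (exp s) \<le> x}"
proof -
  let ?A = "{n. (real n - mean_f a (exp s)) / sigma_f a (exp s) \<le> x}"
  have meas: "Xv a s \<in> Pd a s \<rightarrow>\<^sub>M borel" unfolding Pd_def by simp
  have D: "Dist a s = distr (Pd a s) borel (Xv a s)" using s by (simp add: Dist_def)
  have pre: "Xv a s -` {..x} \<inter> space (Pd a s) = ?A" unfolding Pd_def Xv_def by auto
  let ?g = "\<lambda>n. if n \<in> ?A then pp a s n else 0"
  have gnn: "\<And>n. 0 \<le> ?g n" using pp_nonneg[OF s] by auto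
  have gsm: "summable ?g"
    by (rule summable_comparison_test'[OF pp_summable[OF s], where N=0]) (use pp_nonneg[OF s] in auto)
  have "emeasure (Pd a s) ?A = (\<integral>\<^sup>+ n. ennreal (pp a s n) * indicator ?A n \<partial>count_space UNIV)"
    unfolding Pd_def by (simp add: emeasure_density)
  also have "\<dots> = (\<Sum>n. ennreal (pp a s n) * indicator ?A n)" by (rule nn_integral_count_space_nat)
  also have "\<dots> = (\<Sum>n. ennreal (?g n))" by (intro suminf_cong) (auto simp: indicator_def)
  also have "\<dots> = ennreal (\<Sum>n. ?g n)" using gnn gsm by (rule suminf_ennreal2)
  finally have em: "emeasure (Pd a s) ?A = ennreal (\<Sum>n. ?g n)" .
  have "cdf (Dist a s) x = measure (Pd a s) ?A"
    unfolding cdf_def D by (subst measure_distr[OF meas]) (auto simp: pre)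
  also have "\<dots> = (\<Sum>n. ?g n)" using em suminf_nonneg[OF gsm gnn] by (simp add: measure_def)
  also have "\<dots> = prob_X a (exp s) ?A"
  proof -
    have sm2: "summable (\<lambda>n. if n \<in> ?A then a n * exp s ^ n else 0)"
      using summable_mult[OF gsm, of "psum a (exp s)"] classK_pos[OF K, of s] s
      by (simp add: pp_def psum_ps Sset_def if_distrib cong: if_cong)
    have "(\<lambda>n. ?g n) = (\<lambda>n. (if n \<in> ?A then a n * exp s ^ n else 0) / psum a (exp s))"
      by (rule ext) (simp add: pp_def)
    then show ?thesis unfolding prob_X_def using suminf_divide[OF sm2, of "psum a (exp s)"]
      by simp
  qed
  finally show ?thesis .
qed

end

lemma nu_even_mult: "nu (2 * j) * (2 ^ j * fact j) = fact (2 * j)"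
proof (induction j)
  case 0 then show ?case by simp
next
  case (Suc j)
  have f1: "(fact (2 * Suc j) :: real) = (2 * real j + 2) * ((2 * real j + 1) * fact (2 * j))"
    by (simp add: numeral_2_eq_2 algebra_simps)
  have "nu (2 * Suc j) * (2 ^ Suc j * fact (Suc j)) = (real (Suc (2 * j)) * nu (2 * j)) * (2 * 2 ^ j * ((real j + 1) * fact j))"
    by (simp add: numeral_2_eq_2 algebra_simps)
  also have "\<dots> = (2 * real j + 1) * (2 * real j + 2) * (nu (2 * j) * (2 ^ j * fact j))"
    by (simp add: algebra_simps)
  also have "\<dots> = fact (2 * Suc j)" unfolding Suc f1 by (simp add: algebra_simps)
  finally show ?case .
qed

lemma nu_even: "nu (2 * j) = fact (2 * j) / (2 ^ j * fact j)"
  using nu_even_mult[of j] by (simp add: field_simps)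

lemma nu_odd: "nu (Suc (2 * j)) = 0"
  by (induction j) (auto simp: numeral_2_eq_2)

lemma nu_normal: "integral\<^sup>L std_normal_distribution (\<lambda>x. x ^ k) = nu k"
proof (cases "even k")
  case True
  then obtain j where "k = 2 * j" by (auto elim: evenE)
  then show ?thesis using std_normal_distribution_even_moments(1)[of j] nu_even[of j] by simp
next
  case False
  then obtain j where "k = Suc (2 * j)" by (auto elim: oddE)
  then show ?thesis using integral_std_normal_distribution_moment_odd[of k] False nu_odd[of j] by simp
qed

lemma nu_nonneg_even: "nu (2 * j) \<ge> 0" by (simp add: nu_even)

lemma char_conv_moments:
  fixes \<mu> :: "nat \<Rightarrow> real measure"
  assumes rd: "\<And>n. real_distribution (\<mu> n)"
    and int: "\<And>k. eventually (\<lambda>n. integrable (\<mu> n) (\<lambda>x. x ^ k)) sequentially"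
    and lim: "\<And>k. (\<lambda>n. integral\<^sup>L (\<mu> n) (\<lambda>x. x ^ k)) \<longlonglongrightarrow> nu k"
  shows "weak_conv_m \<mu> std_normal_distribution"
proof (rule levy_continuity[OF rd real_dist_normal_dist])
  fix u :: real
  show "(\<lambda>n. char (\<mu> n) u) \<longlonglongrightarrow> char std_normal_distribution u"
    unfolding tendsto_iff
  proof (intro allI impI)
    fix e :: real assume e: "e > 0"
    have z: "(\<lambda>j. inverse (fact j) * (u\<^sup>2 / 2) ^ j) \<longlonglongrightarrow> 0"
      by (rule summable_LIMSEQ_zero[OF summable_exp])
    have "eventually (\<lambda>j. inverse (fact j) * (u\<^sup>2 / 2) ^ j < e / 4) sequentially"
      by (rule order_tendstoD(2)[OF z]) (use e in simp)
    then obtain j where j: "inverse (fact j) * (u\<^sup>2 / 2) ^ j < e / 4"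
      by (auto simp: eventually_sequentially)
    define m where "m = 2 * j"
    have evm: "even m" unfolding m_def by simp
    define A where "A = 2 * \<bar>u\<bar> ^ m / fact m"
    have key: "2 * A * nu m < e"
    proof -
      have "\<bar>u\<bar> ^ m = (u\<^sup>2) ^ j" unfolding m_def by (simp add: power_mult power2_abs)
      then have "2 * A * nu m = 4 * (inverse (fact j) * (u\<^sup>2 / 2) ^ j)"
        unfolding A_def m_def nu_even by (simp add: field_simps power_divide)
      then show ?thesis using j by simp
    qed
    define T where "T n = (\<Sum>k\<le>m. (\<i> * complex_of_real u) ^ k / fact k * complex_of_real (integral\<^sup>L (\<mu> n) (\<lambda>x. x ^ k)))" for n
    define TN where "TN = (\<Sum>k\<le>m. (\<i> * complex_of_real u) ^ k / fact k * complex_of_real (nu k))"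
    have T_lim: "T \<longlonglongrightarrow> TN"
      unfolding T_def[abs_def] TN_def by (intro tendsto_sum tendsto_mult tendsto_const tendsto_of_real lim)
    have ev_int: "eventually (\<lambda>n. \<forall>k\<in>{..m}. integrable (\<mu> n) (\<lambda>x. x ^ k)) sequentially"
      by (rule eventually_ball_finite) (auto intro: int)
    have bound_n: "eventually (\<lambda>n. cmod (char (\<mu> n) u - T n) \<le> A * integral\<^sup>L (\<mu> n) (\<lambda>x. x ^ m)) sequentially"
      using ev_int
    proof eventually_elim
      case (elim n)
      have "cmod (char (\<mu> n) u - T n) \<le> 2 * \<bar>u\<bar> ^ m / fact m * (LINT x|\<mu> n. \<bar>x\<bar> ^ m)"
        unfolding T_def using real_distribution.char_approx1[OF rd, of m n u] elim by auto
      then show ?case using evm by (simp add: A_def power_even_abs)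
    qed
    have bound_N: "cmod (char std_normal_distribution u - TN) \<le> A * nu m"
    proof -
      have "cmod (char std_normal_distribution u - TN) \<le> 2 * \<bar>u\<bar> ^ m / fact m * (LINT x|std_normal_distribution. \<bar>x\<bar> ^ m)"
        unfolding TN_def nu_normal[symmetric]
        by (rule real_distribution.char_approx1[OF real_dist_normal_dist]) (rule integrable_std_normal_distribution_moment)
      then show ?thesis using evm by (simp add: A_def power_even_abs nu_normal)
    qed
    have Tz: "(\<lambda>n. T n - TN) \<longlonglongrightarrow> 0" using T_lim by (rule LIM_zero)
    have R_lim: "(\<lambda>n. A * integral\<^sup>L (\<mu> n) (\<lambda>x. x ^ m) + cmod (T n - TN) + A * nu m) \<longlonglongrightarrow> A * nu m + 0 + A * nu m"
      by (intro tendsto_add tendsto_mult tendsto_const lim tendsto_norm_zero[OF Tz])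
    have "eventually (\<lambda>n. A * integral\<^sup>L (\<mu> n) (\<lambda>x. x ^ m) + cmod (T n - TN) + A * nu m < e) sequentially"
      by (rule order_tendstoD(2)[OF R_lim]) (use key in simp)
    then show "eventually (\<lambda>n. dist (char (\<mu> n) u) (char std_normal_distribution u) < e) sequentially"
      using bound_n
    proof eventually_elim
      case (elim n)
      have t1: "cmod (char (\<mu> n) u - TN) \<le> cmod (char (\<mu> n) u - T n) + cmod (T n - TN)"
        using norm_triangle_ineq[of "char (\<mu> n) u - T n" "T n - TN"] by simp
      have t2: "cmod (char (\<mu> n) u - char std_normal_distribution u) \<le> cmod (char (\<mu> n) u - TN) + cmod (TN - char std_normal_distribution u)"
        using norm_triangle_ineq[of "char (\<mu> n) u - TN" "TN - char std_normal_distribution u"] by simp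
      have "dist (char (\<mu> n) u) (char std_normal_distribution u)
          \<le> cmod (char (\<mu> n) u - T n) + cmod (T n - TN) + cmod (TN - char std_normal_distribution u)"
        unfolding dist_norm using t1 t2 by linarith
      also have "cmod (TN - char std_normal_distribution u) \<le> A * nu m" using bound_N by (simp add: norm_minus_commute)
      finally show ?case using elim by linarith
    qed
  qed
qed


definition trunc :: "real \<Rightarrow> nat \<Rightarrow> real \<Rightarrow> real" where
  "trunc M m x = (max (- M) (min M x)) ^ m"

lemma trunc_cont: "isCont (trunc M m) x"
  unfolding trunc_def[abs_def] by (intro continuous_intros)

lemma trunc_bnd: "M > 0 \<Longrightarrow> norm (trunc M m x) \<le> M ^ m"
  unfolding trunc_def by (auto simp: power_abs intro!: power_mono)

lemma trunc_diff: 
  assumes M: "M > 0"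
  shows "\<bar>x ^ m - trunc M m x\<bar> \<le> 2 * x ^ (2 * m) / M ^ m"
proof (cases "\<bar>x\<bar> \<le> M")
  case True
  then have "max (- M) (min M x) = x" by (simp add: abs_le_iff max_def min_def)
  then have "trunc M m x = x ^ m" unfolding trunc_def by simp
  moreover have "0 \<le> x ^ (2 * m)" by (simp add: power_mult)
  ultimately show ?thesis using M by simp
next
  case False
  define y where "y = max (- M) (min M x)"
  have y: "\<bar>y\<bar> \<le> M" using M unfolding y_def by auto
  have "\<bar>y ^ m\<bar> \<le> \<bar>x\<bar> ^ m" unfolding power_abs using y False by (intro power_mono) auto
  then have "\<bar>x ^ m - trunc M m x\<bar> \<le> 2 * \<bar>x\<bar> ^ m"
    unfolding trunc_def y_def[symmetric] using abs_triangle_ineq4[of "x^m" "y^m"] by (simp add: power_abs)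
  also have "\<bar>x\<bar> ^ m \<le> x ^ (2 * m) / M ^ m"
  proof -
    have "\<bar>x\<bar> ^ m * M ^ m \<le> \<bar>x\<bar> ^ m * \<bar>x\<bar> ^ m"
      using False M by (intro mult_left_mono power_mono) auto
    also have "\<dots> = x ^ (2 * m)" by (simp add: power_add[symmetric] mult_2 power_even_abs)
    finally show ?thesis using M by (simp add: field_simps)
  qed
  finally show ?thesis by simp
qed

lemma trunc_integral_bound:
  assumes P: "real_distribution P" and i1: "integrable P (\<lambda>x. x ^ m)" and i2: "integrable P (\<lambda>x. x ^ (2 * m))"
    and M: "M > 0"
  shows "\<bar>integral\<^sup>L P (\<lambda>x. x ^ m) - integral\<^sup>L P (trunc M m)\<bar> \<le> 2 * integral\<^sup>L P (\<lambda>x. x ^ (2 * m)) / M ^ m"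
proof -
  interpret real_distribution P by (rule P)
  have meas: "trunc M m \<in> borel_measurable P"
    using borel_measurable_continuous_onI[of "trunc M m"] trunc_cont
    by (simp add: continuous_at_imp_continuous_on measurable_cong_sets[OF events_eq_borel refl])
  have ig: "integrable P (trunc M m)"
    by (rule integrable_const_bound[where B="M ^ m"]) (use trunc_bnd[OF M] meas in auto)
  have "\<bar>integral\<^sup>L P (\<lambda>x. x ^ m) - integral\<^sup>L P (trunc M m)\<bar> = \<bar>integral\<^sup>L P (\<lambda>x. x ^ m - trunc M m x)\<bar>"
    using i1 ig by simp
  also have "\<dots> \<le> integral\<^sup>L P (\<lambda>x. 2 * x ^ (2 * m) / M ^ m)"
    by (rule integral_abs_bound_integral) (use i1 ig i2 trunc_diff[OF M] in auto)
  also have "\<dots> = 2 * integral\<^sup>L P (\<lambda>x. x ^ (2 * m)) / M ^ m"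
    by (simp add: integral_divide_zero)
  finally show ?thesis .
qed

lemma moments_conv_weak:
  fixes \<mu> :: "nat \<Rightarrow> real measure"
  assumes rd: "\<And>n. real_distribution (\<mu> n)"
    and wc: "weak_conv_m \<mu> std_normal_distribution"
    and int: "\<And>k. eventually (\<lambda>n. integrable (\<mu> n) (\<lambda>x. x ^ k)) sequentially"
    and bd: "\<And>k. \<exists>B. eventually (\<lambda>n. integral\<^sup>L (\<mu> n) (\<lambda>x. x ^ (2 * k)) \<le> B) sequentially"
  shows "(\<lambda>n. integral\<^sup>L (\<mu> n) (\<lambda>x. x ^ m)) \<longlonglongrightarrow> nu m"
proof (cases "m = 0")
  case True
  have "integral\<^sup>L (\<mu> n) (\<lambda>x. x ^ m) = 1" for n
  proof -
    interpret real_distribution "\<mu> n" by (rule rd)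
    show ?thesis using True prob_space by (simp add: lebesgue_integral_const)
  qed
  then show ?thesis using True by simp
next
  case False
  show ?thesis
    unfolding tendsto_iff
  proof (intro allI impI)
    fix e :: real assume e: "e > 0"
    obtain B where B: "eventually (\<lambda>n. integral\<^sup>L (\<mu> n) (\<lambda>x. x ^ (2 * m)) \<le> B) sequentially"
      using bd by blast
    define B' where "B' = max B (nu (2 * m))"
    have B'0: "B' \<ge> 0" unfolding B'_def using nu_nonneg_even[of m] by simp
    define M where "M = 8 * B' / e + 1"
    have M1: "M \<ge> 1" unfolding M_def using B'0 e by simp
    have M0: "M > 0" using M1 by simp
    have MmM: "M \<le> M ^ m" using M1 False by (simp add: power_increasing[of 1 m M, simplified])
    have small: "4 * B' / M ^ m < e / 2"
    proof -
      have "4 * B' / M ^ m \<le> 4 * B' / M" using MmM M0 B'0 by (intro divide_left_mono) auto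
      also have "\<dots> < e / 2"
        using e B'0 M0 unfolding M_def by (simp add: field_simps)
      finally show ?thesis .
    qed
    have gconv: "(\<lambda>n. integral\<^sup>L (\<mu> n) (trunc M m)) \<longlonglongrightarrow> integral\<^sup>L std_normal_distribution (trunc M m)"
      by (rule weak_conv_imp_integral_bdd_continuous_conv[OF rd real_dist_normal_dist wc trunc_cont trunc_bnd[OF M0]])
    have ev1: "eventually (\<lambda>n. dist (integral\<^sup>L (\<mu> n) (trunc M m)) (integral\<^sup>L std_normal_distribution (trunc M m)) < e / 2) sequentially"
      using gconv e unfolding tendsto_iff by (meson half_gt_zero)
    have bN: "\<bar>integral\<^sup>L std_normal_distribution (\<lambda>x. x ^ m) - integral\<^sup>L std_normal_distribution (trunc M m)\<bar> \<le> 2 * B' / M ^ m"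
    proof -
      have "\<bar>integral\<^sup>L std_normal_distribution (\<lambda>x. x ^ m) - integral\<^sup>L std_normal_distribution (trunc M m)\<bar>
          \<le> 2 * integral\<^sup>L std_normal_distribution (\<lambda>x. x ^ (2 * m)) / M ^ m"
        by (rule trunc_integral_bound[OF real_dist_normal_dist integrable_std_normal_distribution_moment integrable_std_normal_distribution_moment M0])
      also have "\<dots> \<le> 2 * B' / M ^ m" unfolding nu_normal B'_def using M0 by (intro divide_right_mono) auto
      finally show ?thesis .
    qed
    show "eventually (\<lambda>n. dist (integral\<^sup>L (\<mu> n) (\<lambda>x. x ^ m)) (nu m) < e) sequentially"
      using ev1 B int[of m] int[of "2 * m"]
    proof eventually_elim
      case (elim n)
      have bn: "\<bar>integral\<^sup>L (\<mu> n) (\<lambda>x. x ^ m) - integral\<^sup>L (\<mu> n) (trunc M m)\<bar> \<le> 2 * B' / M ^ m"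
      proof -
        have "\<bar>integral\<^sup>L (\<mu> n) (\<lambda>x. x ^ m) - integral\<^sup>L (\<mu> n) (trunc M m)\<bar>
            \<le> 2 * integral\<^sup>L (\<mu> n) (\<lambda>x. x ^ (2 * m)) / M ^ m"
          by (rule trunc_integral_bound[OF rd]) (use elim M0 in auto)
        also have "\<dots> \<le> 2 * B' / M ^ m" unfolding B'_def using M0 elim by (intro divide_right_mono) auto
        finally show ?thesis .
      qed
      have "dist (integral\<^sup>L (\<mu> n) (\<lambda>x. x ^ m)) (nu m) \<le> 2 * B' / M ^ m + e / 2 + 2 * B' / M ^ m"
        using bn bN elim(1) unfolding dist_real_def nu_normal[symmetric] by linarith
      also have "\<dots> < e" using small by simp
      finally show ?case .
    qed
  qed
qed


lemma conv_cases:
  assumes "classK a"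
  obtains "conv_radius a = \<infinity>" | r where "conv_radius a = ereal r" "r > 0"
proof -
  have p: "conv_radius a > 0" using assms unfolding classK_def by auto
  show ?thesis
  proof (cases "conv_radius a")
    case (real r) then show ?thesis using p that by auto
  next
    case PInf then show ?thesis using that by auto
  next
    case MInf then show ?thesis using p by auto
  qed
qed

context
  fixes a :: "nat \<Rightarrow> real"
  assumes K: "classK a"
begin

abbreviation "Fs \<equiv> left_filter (ln_ereal (conv_radius a))"
abbreviation "Ft \<equiv> left_filter (conv_radius a)"

lemma ev_S: "eventually (\<lambda>s. s \<in> Sset a) Fs"
proof (cases rule: conv_cases[OF K])
  case 1 then show ?thesis by (simp add: left_filter_def ln_ereal_def Sset_def)
next
  case (2 r)
  have "eventually (\<lambda>s. s \<in> {ln r - 1<..<ln r}) (at_left (ln r))" by (rule eventually_at_left_real) simp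
  then have "eventually (\<lambda>s. s \<in> Sset a) (at_left (ln r))"
  proof eventually_elim
    case (elim s)
    then have "exp s < exp (ln r)" by simp
    then show ?case using 2 by (simp add: Sset_def)
  qed
  then show ?thesis using 2 by (simp add: left_filter_def ln_ereal_def)
qed

lemma lim_exp: "filterlim exp Ft Fs"
proof (cases rule: conv_cases[OF K])
  case 1 then show ?thesis by (simp add: left_filter_def ln_ereal_def exp_at_top)
next
  case (2 r)
  have "(exp \<longlongrightarrow> exp (ln r)) (at_left (ln r))" by (intro tendsto_intros tendsto_ident_at)
  then have t: "(exp \<longlongrightarrow> r) (at_left (ln r))" using 2 by simp
  have "eventually (\<lambda>s. s \<in> {ln r - 1<..<ln r}) (at_left (ln r))" by (rule eventually_at_left_real) simp
  then have "eventually (\<lambda>s. exp s < r) (at_left (ln r))"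
  proof eventually_elim
    case (elim s)
    then have "exp s < exp (ln r)" by simp
    then show ?case using 2 by simp
  qed
  then have "filterlim exp (at_left r) (at_left (ln r))" by (rule tendsto_imp_filterlim_at_left[OF t])
  then show ?thesis using 2 by (simp add: left_filter_def ln_ereal_def)
qed

lemma lim_ln: "filterlim ln Fs Ft"
proof (cases rule: conv_cases[OF K])
  case 1 then show ?thesis by (simp add: left_filter_def ln_ereal_def ln_at_top)
next
  case (2 r)
  have "(ln \<longlongrightarrow> ln r) (at_left r)" using 2 by (intro tendsto_intros tendsto_ident_at) auto
  moreover have "eventually (\<lambda>t. t \<in> {r / 2<..<r}) (at_left r)" by (rule eventually_at_left_real) (use 2 in simp)
  then have "eventually (\<lambda>t. ln t < ln r) (at_left r)"
    by eventually_elim (use 2 in auto)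
  ultimately have "filterlim ln (at_left (ln r)) (at_left r)" by (rule tendsto_imp_filterlim_at_left)
  then show ?thesis using 2 by (simp add: left_filter_def ln_ereal_def)
qed

lemma ev_pos: "eventually (\<lambda>t. 0 < t) Ft"
proof (cases rule: conv_cases[OF K])
  case 1 then show ?thesis by (simp add: left_filter_def eventually_gt_at_top)
next
  case (2 r)
  have "eventually (\<lambda>t. t \<in> {0<..<r}) (at_left r)" by (rule eventually_at_left_real) (use 2 in simp)
  then have "eventually (\<lambda>t. 0 < t) (at_left r)" by eventually_elim auto
  then show ?thesis using 2 by (simp add: left_filter_def)
qed

lemma seq_Fs:
  fixes f :: "real \<Rightarrow> real"
  assumes "\<And>X. filterlim X Fs sequentially \<Longrightarrow> (\<lambda>n. f (X n)) \<longlonglongrightarrow> l"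
  shows "(f \<longlongrightarrow> l) Fs"
proof (cases rule: conv_cases[OF K])
  case 1
  then show ?thesis using assms by (simp add: left_filter_def ln_ereal_def tendsto_at_topI_sequentially)
next
  case (2 r)
  have "(f \<longlongrightarrow> l) (at_left (ln r))"
  proof (rule tendsto_at_left_sequentially[of "ln r - 1"])
    fix S :: "nat \<Rightarrow> real" assume S: "\<And>n. S n < ln r" "S \<longlonglongrightarrow> ln r"
    have "filterlim S (at_left (ln r)) sequentially"
      by (rule tendsto_imp_filterlim_at_left[OF S(2)]) (use S(1) in auto)
    then show "(\<lambda>n. f (S n)) \<longlonglongrightarrow> l" using assms 2 by (simp add: left_filter_def ln_ereal_def)
  qed simp
  then show ?thesis using 2 by (simp add: left_filter_def ln_ereal_def)
qed

lemma cumrec_a: "cumrec Fs (mu a) (kap a)"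
proof
  show "eventually (\<lambda>s. (\<forall>m. mu a (Suc m) s = (\<Sum>i = 0..m. of_nat (m choose i) * mu a i s * kap a (Suc (m - i)) s))
      \<and> mu a 0 s = 1 \<and> kap a 1 s = 0 \<and> kap a 2 s = 1) Fs"
    using ev_S by eventually_elim (auto simp: mu_rec[OF K] mu_0[OF K] kap_1[OF K, unfolded One_nat_def] kap_2[OF K])
qed

end

theorem theorem3p4:
  fixes a :: "nat \<Rightarrow> real"
  assumes "classK a"
    and "\<forall>k::nat. k \<ge> 3 \<longrightarrow>
           Limsup (left_filter (ln_ereal (conv_radius a)))
             (\<lambda>s. ereal (\<bar>(deriv ^^ k) (fulcrum a) s\<bar> /
                          ((deriv ^^ 2) (fulcrum a) s) powr (real k / 2))) < \<infinity>"
  shows "gaussian a \<longleftrightarrow>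
         (\<forall>k::nat. k \<ge> 3 \<longrightarrow>
            ((\<lambda>s. (deriv ^^ k) (fulcrum a) s / ((deriv ^^ 2) (fulcrum a) s) powr (real k / 2))
               \<longlongrightarrow> 0) (left_filter (ln_ereal (conv_radius a))))"
proof -
  have K: "classK a" by (rule assms(1))
  let ?Fs = "left_filter (ln_ereal (conv_radius a))"
  let ?Ft = "left_filter (conv_radius a)"
  let ?P = "\<lambda>x t. prob_X a t {n. (real n - mean_f a t) / sigma_f a t \<le> x}"
  interpret cr: cumrec ?Fs "mu a" "kap a" by (rule cumrec_a[OF K])
  have kap_eq: "kap a k = (\<lambda>s. (deriv ^^ k) (fulcrum a) s / ((deriv ^^ 2) (fulcrum a) s) powr (real k / 2))"
    if "k \<ge> 3" for k
    using that by (intro ext) (simp add: kap_def[OF K])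
  have bndk: "bnd ?Fs (kap a k)" if k: "k \<ge> 3" for k
  proof -
    have "Limsup ?Fs (\<lambda>s. ereal (\<bar>(deriv ^^ k) (fulcrum a) s\<bar> /
                          ((deriv ^^ 2) (fulcrum a) s) powr (real k / 2))) < \<infinity>"
      using assms(2) k by blast
    then obtain B where B: "Limsup ?Fs (\<lambda>s. ereal (\<bar>(deriv ^^ k) (fulcrum a) s\<bar> /
                          ((deriv ^^ 2) (fulcrum a) s) powr (real k / 2))) < ereal B"
      using ereal_dense2 by blast
    have "eventually (\<lambda>s. ereal (\<bar>(deriv ^^ k) (fulcrum a) s\<bar> /
                          ((deriv ^^ 2) (fulcrum a) s) powr (real k / 2)) < ereal B) ?Fs"
      by (rule Limsup_lessD[OF B])
    then have "eventually (\<lambda>s. \<bar>kap a k s\<bar> \<le> B) ?Fs"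
      by eventually_elim (simp add: kap_eq[OF k] abs_divide)
    then show ?thesis unfolding bnd_def by blast
  qed
  have evS: "eventually (\<lambda>n. X n \<in> Sset a) sequentially" if X: "filterlim X ?Fs sequentially" for X
    using X ev_S[OF K] unfolding filterlim_iff by blast
  have cdf_ev: "eventually (\<lambda>s. cdf (Dist a s) x = ?P x (exp s)) ?Fs" for x
    using ev_S[OF K] by eventually_elim (rule Dist_cdf[OF K])
  have gauss_iff: "gaussian a \<longleftrightarrow> (\<forall>x. ((\<lambda>s. cdf (Dist a s) x) \<longlongrightarrow> Phi x) ?Fs)"
  proof
    assume g: "gaussian a"
    show "\<forall>x. ((\<lambda>s. cdf (Dist a s) x) \<longlongrightarrow> Phi x) ?Fs"
    proof
      fix x
      have "((?P x) \<longlongrightarrow> Phi x) ?Ft" using g unfolding gaussian_def by blast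
      then have "((\<lambda>s. ?P x (exp s)) \<longlongrightarrow> Phi x) ?Fs" by (rule filterlim_compose[OF _ lim_exp[OF K]])
      then show "((\<lambda>s. cdf (Dist a s) x) \<longlongrightarrow> Phi x) ?Fs"
        by (rule Lim_transform_eventually) (use cdf_ev[of x] in \<open>auto elim: eventually_mono\<close>)
    qed
  next
    assume c: "\<forall>x. ((\<lambda>s. cdf (Dist a s) x) \<longlongrightarrow> Phi x) ?Fs"
    show "gaussian a" unfolding gaussian_def
    proof
      fix x
      have "((\<lambda>t. cdf (Dist a (ln t)) x) \<longlongrightarrow> Phi x) ?Ft"
        using c by (intro filterlim_compose[OF _ lim_ln[OF K]]) blast
      moreover have "eventually (\<lambda>t. cdf (Dist a (ln t)) x = ?P x t) ?Ft"
      proof -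
        have "eventually (\<lambda>t. cdf (Dist a (ln t)) x = ?P x (exp (ln t))) ?Ft"
          using lim_ln[OF K] cdf_ev[of x] unfolding filterlim_iff by blast
        then show ?thesis using ev_pos[OF K] by eventually_elim simp
      qed
      ultimately show "((?P x) \<longlongrightarrow> Phi x) ?Ft" by (rule Lim_transform_eventually)
    qed
  qed
  have int_ev: "eventually (\<lambda>n. integrable (Dist a (X n)) (\<lambda>x. x ^ k)) sequentially"
    if X: "filterlim X ?Fs sequentially" for X k
    using evS[OF X] by eventually_elim (rule Dist_moment(1)[OF K])
  have mom_ev: "eventually (\<lambda>n. mu a k (X n) = integral\<^sup>L (Dist a (X n)) (\<lambda>x. x ^ k)) sequentially"
    if X: "filterlim X ?Fs sequentially" for X k
    using evS[OF X] by eventually_elim (rule Dist_moment(2)[OF K, symmetric])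
  have rd: "real_distribution (Dist a s)" for s by (rule real_dist_Dist[OF K])
  have rhs_iff: "(\<forall>k::nat. k \<ge> 3 \<longrightarrow>
            ((\<lambda>s. (deriv ^^ k) (fulcrum a) s / ((deriv ^^ 2) (fulcrum a) s) powr (real k / 2))
               \<longlongrightarrow> 0) ?Fs) \<longleftrightarrow> (\<forall>k::nat. k \<ge> 3 \<longrightarrow> (kap a k \<longlongrightarrow> 0) ?Fs)"
    using kap_eq by auto
  show ?thesis unfolding rhs_iff gauss_iff
  proof
    assume c: "\<forall>x. ((\<lambda>s. cdf (Dist a s) x) \<longlongrightarrow> Phi x) ?Fs"
    have bm: "bnd ?Fs (mu a m)" for m using bndk by (intro cr.bounded_mu) auto
    have ml: "(mu a m \<longlongrightarrow> nu m) ?Fs" for m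
    proof (rule seq_Fs[OF K])
      fix X assume X: "filterlim X ?Fs sequentially"
      have wc: "weak_conv_m (\<lambda>n. Dist a (X n)) std_normal_distribution"
        unfolding weak_conv_m_def weak_conv_def
      proof (intro allI impI)
        fix x
        have "((\<lambda>s. cdf (Dist a s) x) \<longlongrightarrow> Phi x) ?Fs" using c by blast
        then have "(\<lambda>n. cdf (Dist a (X n)) x) \<longlonglongrightarrow> Phi x" by (rule filterlim_compose[OF _ X])
        then show "(\<lambda>n. cdf (Dist a (X n)) x) \<longlonglongrightarrow> cdf std_normal_distribution x" by (simp add: Phi_cdf)
      qed
      have bd: "\<exists>B. eventually (\<lambda>n. integral\<^sup>L (Dist a (X n)) (\<lambda>x. x ^ (2 * k)) \<le> B) sequentially" for k
      proof -
        obtain B where B: "eventually (\<lambda>s. \<bar>mu a (2 * k) s\<bar> \<le> B) ?Fs" using bm[of "2 * k"] unfolding bnd_def by blast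
        have "eventually (\<lambda>n. \<bar>mu a (2 * k) (X n)\<bar> \<le> B) sequentially"
          using X B unfolding filterlim_iff by blast
        then have "eventually (\<lambda>n. integral\<^sup>L (Dist a (X n)) (\<lambda>x. x ^ (2 * k)) \<le> B) sequentially"
          using mom_ev[OF X, of "2 * k"] by eventually_elim auto
        then show ?thesis by blast
      qed
      have "(\<lambda>n. integral\<^sup>L (Dist a (X n)) (\<lambda>x. x ^ m)) \<longlonglongrightarrow> nu m"
        by (rule moments_conv_weak[OF rd wc int_ev[OF X] bd])
      then show "(\<lambda>n. mu a m (X n)) \<longlonglongrightarrow> nu m"
        by (rule Lim_transform_eventually) (use mom_ev[OF X, of m] in \<open>auto elim: eventually_mono\<close>)
    qed
    show "\<forall>k::nat. k \<ge> 3 \<longrightarrow> (kap a k \<longlongrightarrow> 0) ?Fs"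
    proof (intro allI impI)
      fix k :: nat assume k: "k \<ge> 3"
      have "(kap a k \<longlongrightarrow> klim k) ?Fs" using k by (intro cr.kap_lim ml) auto
      then show "(kap a k \<longlongrightarrow> 0) ?Fs" using k by (simp add: klim_def)
    qed
  next
    assume c: "\<forall>k::nat. k \<ge> 3 \<longrightarrow> (kap a k \<longlongrightarrow> 0) ?Fs"
    have ml: "(mu a m \<longlongrightarrow> nu m) ?Fs" for m using c by (intro cr.mu_lim) auto
    show "\<forall>x. ((\<lambda>s. cdf (Dist a s) x) \<longlongrightarrow> Phi x) ?Fs"
    proof
      fix x
      show "((\<lambda>s. cdf (Dist a s) x) \<longlongrightarrow> Phi x) ?Fs"
      proof (rule seq_Fs[OF K])
        fix X assume X: "filterlim X ?Fs sequentially"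
        have lim: "(\<lambda>n. integral\<^sup>L (Dist a (X n)) (\<lambda>x. x ^ k)) \<longlonglongrightarrow> nu k" for k
        proof -
          have "(\<lambda>n. mu a k (X n)) \<longlonglongrightarrow> nu k" by (rule filterlim_compose[OF ml X])
          then show ?thesis by (rule Lim_transform_eventually) (use mom_ev[OF X, of k] in \<open>auto elim: eventually_mono\<close>)
        qed
        have wc: "weak_conv_m (\<lambda>n. Dist a (X n)) std_normal_distribution"
          by (rule char_conv_moments[OF rd int_ev[OF X] lim])
        then show "(\<lambda>n. cdf (Dist a (X n)) x) \<longlonglongrightarrow> Phi x"
          unfolding weak_conv_m_def weak_conv_def Phi_cdf using isCont_Phi by blast
      qed
    qed
  qed
qed


end
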